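(* Let $h:H\to H$ be Fréchet differentiable with continuous derivative $Dh:H\to L(H)$ satisfying $\sup_{\|v\|_H=1}\|Dh(u)v\|_H\le C(1+\|u\|_H)$ for all $u\in H$. Let $f:\mathcal{P}_2(H)\to H$, $f(\mu):=\int_Hh(x)\,\mu(dx)$ (Bochner integral). Then for all $X_1,X_2\in L^2(\Omega,H)$, $$|\!|\!|D\hat f(X_1)|\!|\!|_{2,\mathbb{P}}^2\le\mathbb{E}\big[\|Dh(X_1)\|^2\big]<\infty,\qquad |\!|\!|D\hat f(X_1)-D\hat f(X_2)|\!|\!|_{2,\mathbb{P}}^2\le\mathbb{E}\big[\|Dh(X_1)-Dh(X_2)\|^2\big].$$ In particular $f$ is absolutely continuous $L$-differentiable with $\partial_\mu f(\mu_0)(x)=Dh(x)$ for every $\mu_0\in\mathcal{P}_2(H)$.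
   Context: $(\Omega,\mathcal{F},\mathbb{P})$ complete atomless probability space, $\Omega$ Polish; $H$ separable real Hilbert space; $\|\cdot\|$ the operator norm on $L(H)=L(H,H)$. $\hat f(X)=f(\mathcal{L}(X))$ is the lift on $L^2(\Omega,H)$. For bounded linear $L:L^2(\Omega,H)\to H$, $|\!|\!|L|\!|\!|_{2,\mathbb{P}}:=\sup\{\sum_i\|L(\mathbf{1}_{A_i}x_i)\|_H:A_i\in\mathcal{F}$ pairwise disjoint, $x_i\in H$, $\mathbb{E}\|\sum_i\mathbf{1}_{A_i}x_i\|^2\le1\}$. $f$ is absolutely continuous $L$-differentiable if $\hat f$ is Fréchet differentiable with $|\!|\!|D\hat f(X)|\!|\!|_{2,\mathbb{P}}<\infty$ for all $X$ and $X\mapsto D\hat f(X)$ continuous in this norm; $\partial_\mu f(\mu_0)\in L^2(H,\mu_0;L(H))$ is then the unique element with $D\hat f(X)Y=\mathbb{E}[\partial_\mu f(\mu_0)(X)Y]$ for all $X\sim\mu_0$, $Y\in L^2(\Omega,H)$. *)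

theory Defs
  imports "HOL-Probability.Probability"
begin

definition L2rv :: "'w measure \<Rightarrow> ('w \<Rightarrow> 'h::{real_normed_vector, second_countable_topology}) set" where
  "L2rv M = {X. X \<in> borel_measurable M \<and> integrable M (\<lambda>w. (norm (X w))\<^sup>2)}"

definition L2norm :: "'w measure \<Rightarrow> ('w \<Rightarrow> 'h::real_normed_vector) \<Rightarrow> real" where
  "L2norm M X = sqrt (integral\<^sup>L M (\<lambda>w. (norm (X w))\<^sup>2))"

definition P2 :: "('h::{real_normed_vector, second_countable_topology}) measure set" where
  "P2 = {\<mu>. prob_space \<mu> \<and> sets \<mu> = sets borel \<and> (\<integral>\<^sup>+ x. ennreal ((norm x)\<^sup>2) \<partial>\<mu>) < \<infinity>}"

definition lift :: "'w measure \<Rightarrow> ('h::topological_space measure \<Rightarrow> 'b) \<Rightarrow> ('w \<Rightarrow> 'h) \<Rightarrow> 'b" where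
  "lift M f X = f (distr M borel X)"

definition frechet_L2 :: "'w measure \<Rightarrow> (('w \<Rightarrow> 'h::{real_normed_vector, second_countable_topology}) \<Rightarrow> 'h) \<Rightarrow> ('w \<Rightarrow> 'h) \<Rightarrow> (('w \<Rightarrow> 'h) \<Rightarrow> 'h) \<Rightarrow> bool"
  where
  "frechet_L2 M F X L \<longleftrightarrow>
     (\<forall>Y\<in>L2rv M. \<forall>Z\<in>L2rv M. L (\<lambda>w. Y w + Z w) = L Y + L Z) \<and>
     (\<forall>Y\<in>L2rv M. \<forall>c::real. L (\<lambda>w. c *\<^sub>R Y w) = c *\<^sub>R L Y) \<and>
     (\<exists>K. \<forall>Y\<in>L2rv M. norm (L Y) \<le> K * L2norm M Y) \<and>
     (\<forall>e>0. \<exists>d>0. \<forall>Y\<in>L2rv M. L2norm M Y < d \<longrightarrow>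
         norm (F (\<lambda>w. X w + Y w) - F X - L Y) \<le> e * L2norm M Y)"

definition trinorm :: "'w measure \<Rightarrow> (('w \<Rightarrow> 'h::real_normed_vector) \<Rightarrow> 'h) \<Rightarrow> ennreal" where
  "trinorm M L = Sup {ennreal (\<Sum>i\<in>I. norm (L (\<lambda>w. indicator (A i) w *\<^sub>R x i))) | I A x.
       finite (I::nat set) \<and> (\<forall>i\<in>I. A i \<in> sets M) \<and> disjoint_family_on A I \<and>
       integral\<^sup>L M (\<lambda>w. (norm (\<Sum>i\<in>I. indicator (A i) w *\<^sub>R x i))\<^sup>2) \<le> 1}"

definition abs_cont_L_diff :: "'w measure \<Rightarrow> ('h::{real_normed_vector, second_countable_topology} measure \<Rightarrow> 'h) \<Rightarrow> bool" where
  "abs_cont_L_diff M f \<longleftrightarrow>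
     (\<forall>X\<in>L2rv M. \<exists>L. frechet_L2 M (lift M f) X L \<and> trinorm M L < \<infinity>) \<and>
     (\<forall>X\<in>L2rv M. \<forall>e>0. \<exists>d>0. \<forall>X'\<in>L2rv M. \<forall>L L'.
         frechet_L2 M (lift M f) X L \<longrightarrow> frechet_L2 M (lift M f) X' L' \<longrightarrow>
         L2norm M (\<lambda>w. X' w - X w) < d \<longrightarrow> trinorm M (\<lambda>Y. L' Y - L Y) < ennreal e)"

definition is_L_derivative :: "'w measure \<Rightarrow> ('h::{real_normed_vector, second_countable_topology} measure \<Rightarrow> 'h)
    \<Rightarrow> 'h measure \<Rightarrow> ('h \<Rightarrow> ('h \<Rightarrow>\<^sub>L 'h)) \<Rightarrow> bool" where
  "is_L_derivative M f \<mu>0 g \<longleftrightarrow>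
     g \<in> borel_measurable \<mu>0 \<and> (\<integral>\<^sup>+ x. ennreal ((norm (g x))\<^sup>2) \<partial>\<mu>0) < \<infinity> \<and>
     (\<forall>X\<in>L2rv M. distr M borel X = \<mu>0 \<longrightarrow> (\<forall>L. frechet_L2 M (lift M f) X L \<longrightarrow>
        (\<forall>Y\<in>L2rv M. L Y = integral\<^sup>L M (\<lambda>w. blinfun_apply (g (X w)) (Y w)))))"

definition atomless :: "'w measure \<Rightarrow> bool" where
  "atomless M \<longleftrightarrow> (\<forall>A\<in>sets M. measure M A > 0 \<longrightarrow>
      (\<exists>B\<in>sets M. B \<subseteq> A \<and> 0 < measure M B \<and> measure M B < measure M A))"

end

theory Submission
  imports Defs
begin

lemma integrableI_sequence_h:
  fixes f :: "'a \<Rightarrow> 'b::{real_normed_vector, complete_space, second_countable_topology}"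
    and s :: "nat \<Rightarrow> 'a \<Rightarrow> 'b"
  assumes f[measurable]: "f \<in> borel_measurable M"
  assumes s: "\<And>i. Bochner_Integration.simple_bochner_integrable M (s i)"
  assumes lim: "(\<lambda>i. \<integral>\<^sup>+x. norm (f x - s i x) \<partial>M) \<longlonglongrightarrow> 0" (is "?S \<longlonglongrightarrow> 0")
  shows "integrable M f"
proof -
  let ?s = "\<lambda>n. Bochner_Integration.simple_bochner_integral M (s n)"
  have "\<exists>x. ?s \<longlonglongrightarrow> x"
    unfolding convergent_eq_Cauchy
  proof (rule metric_CauchyI)
    fix e :: real assume "0 < e"
    then have "0 < ennreal (e / 2)" by auto
    from order_tendstoD(2)[OF lim this]
    obtain M where M: "\<And>n. M \<le> n \<Longrightarrow> ?S n < e / 2"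
      by (auto simp: eventually_sequentially)
    show "\<exists>M. \<forall>m\<ge>M. \<forall>n\<ge>M. dist (?s m) (?s n) < e"
    proof (intro exI allI impI)
      fix m n assume m: "M \<le> m" and n: "M \<le> n"
      have "?S n \<noteq> \<infinity>"
        using M[OF n] by auto
      have "norm (?s n - ?s m) \<le> ?S n + ?S m"
        by (intro simple_bochner_integral_bounded s f)
      also have "\<dots> < ennreal (e / 2) + e / 2"
        by (intro add_strict_mono M n m)
      also have "\<dots> = e" using \<open>0<e\<close> by (simp flip: ennreal_plus)
      finally show "dist (?s n) (?s m) < e"
        using \<open>0<e\<close> by (simp add: dist_norm ennreal_less_iff)
    qed
  qed
  then obtain x where "?s \<longlonglongrightarrow> x" ..
  show ?thesis
    by (rule, rule) fact+
qed

lemma integrableI_bounded_h: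
  fixes f :: "'a \<Rightarrow> 'b::{real_normed_vector, complete_space, second_countable_topology}"
  assumes f[measurable]: "f \<in> borel_measurable M" and fin: "(\<integral>\<^sup>+x. norm (f x) \<partial>M) < \<infinity>"
  shows "integrable M f"
proof -
  from borel_measurable_implies_sequence_metric[OF f, of 0] obtain s where
    s: "\<And>i. simple_function M (s i)" and
    pointwise: "\<And>x. x \<in> space M \<Longrightarrow> (\<lambda>i. s i x) \<longlonglongrightarrow> f x" and
    bound: "\<And>i x. x \<in> space M \<Longrightarrow> norm (s i x) \<le> 2 * norm (f x)"
    by simp metis
  show ?thesis
  proof (rule integrableI_sequence_h)
    { fix i
      have "(\<integral>\<^sup>+x. norm (s i x) \<partial>M) \<le> (\<integral>\<^sup>+x. ennreal (2 * norm (f x)) \<partial>M)"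
        by (intro nn_integral_mono) (simp add: bound)
      also have "\<dots> = 2 * (\<integral>\<^sup>+x. ennreal (norm (f x)) \<partial>M)"
        by (simp add: ennreal_mult nn_integral_cmult)
      also have "\<dots> < top"
        using fin by (simp add: ennreal_mult_less_top)
      finally have "(\<integral>\<^sup>+x. norm (s i x) \<partial>M) < \<infinity>"
        by simp }
    note fin_s = this
    show "\<And>i. Bochner_Integration.simple_bochner_integrable M (s i)"
      by (rule simple_bochner_integrableI_bounded) fact+
    show "(\<lambda>i. \<integral>\<^sup>+ x. ennreal (norm (f x - s i x)) \<partial>M) \<longlonglongrightarrow> 0"
    proof (rule nn_integral_dominated_convergence_norm)
      show "\<And>j. AE x in M. norm (s j x) \<le> 2 * norm (f x)"
        using bound by auto
      show "\<And>i. s i \<in> borel_measurable M" "(\<lambda>x. 2 * norm (f x)) \<in> borel_measurable M"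
        using s by (auto intro: borel_measurable_simple_function)
      show "(\<integral>\<^sup>+ x. ennreal (2 * norm (f x)) \<partial>M) < \<infinity>"
        using fin by (simp add: nn_integral_cmult ennreal_mult ennreal_mult_less_top)
      show "AE x in M. (\<lambda>i. s i x) \<longlonglongrightarrow> f x"
        using pointwise by auto
    qed fact
  qed fact
qed

lemma integrable_iff_bounded_h:
  fixes f :: "'a \<Rightarrow> 'b::{real_normed_vector, complete_space, second_countable_topology}"
  shows "integrable M f \<longleftrightarrow> f \<in> borel_measurable M \<and> (\<integral>\<^sup>+x. norm (f x) \<partial>M) < \<infinity>"
  using integrableI_bounded_h[of f M] has_bochner_integral_implies_finite_norm[of M f]
  unfolding integrable.simps has_bochner_integral.simps[abs_def] by auto

lemma integrable_bound_h:
  fixes f :: "'a \<Rightarrow> 'b::{real_normed_vector, complete_space, second_countable_topology}"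
    and g :: "'a \<Rightarrow> 'c::{real_normed_vector, complete_space, second_countable_topology}"
  assumes "integrable M f" "g \<in> borel_measurable M" "AE x in M. norm (g x) \<le> norm (f x)"
  shows "integrable M g"
proof -
  have "(\<integral>\<^sup>+x. norm (g x) \<partial>M) \<le> (\<integral>\<^sup>+x. norm (f x) \<partial>M)"
    using assms(3) by (intro nn_integral_mono_AE) auto
  also have "\<dots> < \<infinity>" using assms(1) by (simp add: integrable_iff_bounded_h)
  finally show ?thesis using assms(2) by (simp add: integrable_iff_bounded_h)
qed

lemma integrable_norm_h:
  fixes f :: "'a \<Rightarrow> 'b::{real_normed_vector, complete_space, second_countable_topology}"
  assumes "integrable M f"
  shows "integrable M (\<lambda>x. norm (f x))"
  using assms measurable_compose[OF _ borel_measurable_norm, of f M] by (simp add: integrable_iff_bounded_h)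

lemma integral_norm_bound_h:
  fixes f :: "'a \<Rightarrow> 'b::{real_normed_vector, complete_space, second_countable_topology}"
  shows "norm (integral\<^sup>L M f) \<le> (\<integral>x. norm (f x) \<partial>M)"
proof (cases "integrable M f")
  case True
  have "ennreal (norm (integral\<^sup>L M f)) \<le> (\<integral>\<^sup>+x. norm (f x) \<partial>M)"
    using integral_norm_bound_ennreal[OF True] .
  also have "\<dots> = ennreal (\<integral>x. norm (f x) \<partial>M)"
    by (rule nn_integral_eq_integral) (auto intro: integrable_norm_h[OF True])
  finally show ?thesis by (simp add: ennreal_le_iff integral_nonneg_AE)
next
  case False
  then show ?thesis by (simp add: not_integrable_integral_eq integral_nonneg_AE)
qed

lemma inner_eqI_h:
  fixes a b :: "'b::real_inner"
  assumes "\<And>v. v \<bullet> a = v \<bullet> b"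
  shows "a = b"
proof -
  have "(a - b) \<bullet> (a - b) = 0" using assms[of "a - b"] by (simp add: inner_diff_right)
  then show ?thesis by simp
qed

lemma integral_distr_h:
  fixes f :: "'a \<Rightarrow> 'b::{real_inner, complete_space, second_countable_topology}"
  assumes g[measurable]: "g \<in> measurable M N" and f[measurable]: "f \<in> borel_measurable N"
  shows "integral\<^sup>L (distr M N g) f = integral\<^sup>L M (\<lambda>x. f (g x))"
proof -
  have ieq: "integrable (distr M N g) f \<longleftrightarrow> integrable M (\<lambda>x. f (g x))"
    unfolding integrable_iff_bounded_h by (simp_all add: nn_integral_distr)
  show ?thesis
  proof (cases "integrable M (\<lambda>x. f (g x))")
    case True
    then have i2: "integrable (distr M N g) f" using ieq by simp
    show ?thesis
    proof (rule inner_eqI_h)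
      fix v :: 'b
      have "v \<bullet> integral\<^sup>L (distr M N g) f = (\<integral>x. v \<bullet> f x \<partial>distr M N g)"
        using i2 by simp
      also have "\<dots> = (\<integral>x. v \<bullet> f (g x) \<partial>M)"
        by (rule integral_distr) auto
      also have "\<dots> = v \<bullet> integral\<^sup>L M (\<lambda>x. f (g x))"
        using True by simp
      finally show "v \<bullet> integral\<^sup>L (distr M N g) f = v \<bullet> integral\<^sup>L M (\<lambda>x. f (g x))" .
    qed
  next
    case False
    then show ?thesis using ieq by (simp add: not_integrable_integral_eq)
  qed
qed

lemma real_cs_aux:
  fixes A B c :: real
  assumes "A \<ge> 0" "B \<ge> 0" "\<And>t. t > 0 \<Longrightarrow> 2 * c \<le> t * A + B / t"
  shows "c \<le> sqrt A * sqrt B"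
proof (cases "A > 0 \<and> B > 0")
  case True
  define a where "a = sqrt A"
  define b where "b = sqrt B"
  have a: "a > 0" "A = a * a" using True assms unfolding a_def by auto
  have b: "b > 0" "B = b * b" using True assms unfolding b_def by auto
  have tp: "b / a > 0" using a b by simp
  have "2 * c \<le> (b / a) * A + B / (b / a)" using assms(3)[OF tp] by simp
  also have "(b / a) * A = a * b" using a b by (simp add: field_simps)
  also have "B / (b / a) = a * b" using a b by (simp add: field_simps)
  finally show ?thesis unfolding a_def b_def by simp
next
  case False
  show ?thesis
  proof (rule ccontr)
    assume "\<not> ?thesis"
    moreover have "sqrt A * sqrt B \<ge> 0" using assms by simp
    ultimately have cp: "c > 0" by linarith
    show False
    proof (cases "A = 0")
      case True
      have tp: "(B + 1) / c > 0" using cp assms by simp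
      have "2 * c \<le> B / ((B + 1) / c)" using assms(3)[OF tp] True by simp
      also have "\<dots> = B * c / (B + 1)" using cp assms by (simp add: field_simps)
      also have "\<dots> < c" using cp assms by (simp add: field_simps)
      finally show False using cp by simp
    next
      case False
      then have B0: "B = 0" using \<open>\<not> (A > 0 \<and> B > 0)\<close> assms by auto
      have tp: "c / (A + 1) > 0" using cp assms by simp
      have "2 * c \<le> (c / (A + 1)) * A" using assms(3)[OF tp] B0 by simp
      also have "\<dots> = c * A / (A + 1)" by simp
      also have "\<dots> < c" using cp assms by (simp add: field_simps)
      finally show False using cp by simp
    qed
  qed
qed
lemma prod_sq_integrable:
  fixes f g :: "'w \<Rightarrow> real"
  assumes "f \<in> borel_measurable M" "g \<in> borel_measurable M"
    "integrable M (\<lambda>w. (f w)\<^sup>2)" "integrable M (\<lambda>w. (g w)\<^sup>2)"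
  shows "integrable M (\<lambda>w. f w * g w)"
proof (rule Bochner_Integration.integrable_bound[where f="\<lambda>w. ((f w)\<^sup>2 + (g w)\<^sup>2)"])
  show "integrable M (\<lambda>w. (f w)\<^sup>2 + (g w)\<^sup>2)" using assms by auto
  show "(\<lambda>w. f w * g w) \<in> borel_measurable M" using assms by simp
  show "AE x in M. norm (f x * g x) \<le> norm ((f x)\<^sup>2 + (g x)\<^sup>2)"
  proof (rule AE_I2)
    fix x
    have "2 * \<bar>f x * g x\<bar> \<le> (f x)\<^sup>2 + (g x)\<^sup>2"
      using sum_squares_bound[of "\<bar>f x\<bar>" "\<bar>g x\<bar>"] by (simp add: abs_mult)
    then show "norm (f x * g x) \<le> norm ((f x)\<^sup>2 + (g x)\<^sup>2)" by simp
  qed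
qed

lemma cs_integral:
  fixes f g :: "'w \<Rightarrow> real"
  assumes "f \<in> borel_measurable M" "g \<in> borel_measurable M"
    "integrable M (\<lambda>w. (f w)\<^sup>2)" "integrable M (\<lambda>w. (g w)\<^sup>2)"
  shows "(\<integral>w. \<bar>f w * g w\<bar> \<partial>M) \<le> sqrt (\<integral>w. (f w)\<^sup>2 \<partial>M) * sqrt (\<integral>w. (g w)\<^sup>2 \<partial>M)"
proof (rule real_cs_aux)
  show "0 \<le> (\<integral>w. (f w)\<^sup>2 \<partial>M)" "0 \<le> (\<integral>w. (g w)\<^sup>2 \<partial>M)" by auto
  fix t :: real assume t: "t > 0"
  have "2 * (\<integral>w. \<bar>f w * g w\<bar> \<partial>M) = (\<integral>w. 2 * \<bar>f w * g w\<bar> \<partial>M)" by simp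
  also have "\<dots> \<le> (\<integral>w. t * (f w)\<^sup>2 + (g w)\<^sup>2 / t \<partial>M)"
  proof (rule integral_mono')
    show "integrable M (\<lambda>w. t * (f w)\<^sup>2 + (g w)\<^sup>2 / t)" using assms by auto
    fix w
    have "0 \<le> (t * \<bar>f w\<bar> - \<bar>g w\<bar>)\<^sup>2" by simp
    then have "2 * t * \<bar>f w\<bar> * \<bar>g w\<bar> \<le> t\<^sup>2 * (f w)\<^sup>2 + (g w)\<^sup>2"
      by (simp add: power2_eq_square algebra_simps)
    then have "2 * \<bar>f w * g w\<bar> * t \<le> (t * (f w)\<^sup>2 + (g w)\<^sup>2 / t) * t"
      using t by (simp add: power2_eq_square algebra_simps abs_mult)
    then show "2 * \<bar>f w * g w\<bar> \<le> t * (f w)\<^sup>2 + (g w)\<^sup>2 / t" using t by simp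
    show "0 \<le> t * (f w)\<^sup>2 + (g w)\<^sup>2 / t" using t by simp
  qed
  also have "\<dots> = t * (\<integral>w. (f w)\<^sup>2 \<partial>M) + (\<integral>w. (g w)\<^sup>2 \<partial>M) / t"
    using assms by simp
  finally show "2 * (\<integral>w. \<bar>f w * g w\<bar> \<partial>M) \<le> t * (\<integral>w. (f w)\<^sup>2 \<partial>M) + (\<integral>w. (g w)\<^sup>2 \<partial>M) / t" .
qed

lemma L2rv_add:
  fixes Y Z :: "'w \<Rightarrow> 'h::{real_normed_vector, second_countable_topology}"
  assumes "Y \<in> L2rv M" "Z \<in> L2rv M"
  shows "(\<lambda>w. Y w + Z w) \<in> L2rv M"
  unfolding L2rv_def
proof safe
  show m: "(\<lambda>w. Y w + Z w) \<in> borel_measurable M" using assms by (auto simp: L2rv_def)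
  show "integrable M (\<lambda>w. (norm (Y w + Z w))\<^sup>2)"
  proof (rule Bochner_Integration.integrable_bound[where f="\<lambda>w. 2 * (norm (Y w))\<^sup>2 + 2 * (norm (Z w))\<^sup>2"])
    show "integrable M (\<lambda>w. 2 * (norm (Y w))\<^sup>2 + 2 * (norm (Z w))\<^sup>2)"
      using assms by (auto simp: L2rv_def)
    show "(\<lambda>w. (norm (Y w + Z w))\<^sup>2) \<in> borel_measurable M" using m by measurable
    show "AE x in M. norm ((norm (Y x + Z x))\<^sup>2) \<le> norm (2 * (norm (Y x))\<^sup>2 + 2 * (norm (Z x))\<^sup>2)"
    proof (rule AE_I2)
      fix x
      have "norm (Y x + Z x) \<le> norm (Y x) + norm (Z x)" by (rule norm_triangle_ineq)
      then have "(norm (Y x + Z x))\<^sup>2 \<le> (norm (Y x) + norm (Z x))\<^sup>2"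
        by (simp add: power_mono)
      also have "\<dots> \<le> 2 * (norm (Y x))\<^sup>2 + 2 * (norm (Z x))\<^sup>2"
        by (smt (verit) power2_sum sum_squares_bound)
      finally show "norm ((norm (Y x + Z x))\<^sup>2) \<le> norm (2 * (norm (Y x))\<^sup>2 + 2 * (norm (Z x))\<^sup>2)"
        by simp
    qed
  qed
qed

lemma L2rv_scale:
  fixes Y :: "'w \<Rightarrow> 'h::{real_normed_vector, second_countable_topology}"
  assumes "Y \<in> L2rv M"
  shows "(\<lambda>w. c *\<^sub>R Y w) \<in> L2rv M"
  using assms unfolding L2rv_def by (auto simp: power_mult_distrib)

lemma L2rv_diff:
  fixes Y Z :: "'w \<Rightarrow> 'h::{real_normed_vector, second_countable_topology}"
  assumes "Y \<in> L2rv M" "Z \<in> L2rv M"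
  shows "(\<lambda>w. Y w - Z w) \<in> L2rv M"
  using L2rv_add[OF assms(1) L2rv_scale[OF assms(2), of "-1"]] by simp

lemma L2norm_scale:
  fixes Y :: "'w \<Rightarrow> 'h::real_normed_vector"
  shows "L2norm M (\<lambda>w. c *\<^sub>R Y w) = \<bar>c\<bar> * L2norm M Y"
  unfolding L2norm_def by (simp add: power_mult_distrib real_sqrt_mult)

lemma L2norm_sq:
  fixes Y :: "'w \<Rightarrow> 'h::real_normed_vector"
  shows "(L2norm M Y)\<^sup>2 = (\<integral>w. (norm (Y w))\<^sup>2 \<partial>M)"
  unfolding L2norm_def by simp

lemma gdct:
  fixes a c :: "nat \<Rightarrow> 'w \<Rightarrow> real" and B :: "'w \<Rightarrow> real"
  assumes am: "\<And>n. a n \<in> borel_measurable M" and a0: "\<And>n w. 0 \<le> a n w"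
    and aB: "\<And>n w. a n w \<le> B w + c n w"
    and Bi: "integrable M B" and B0: "\<And>w. 0 \<le> B w"
    and ci: "\<And>n. integrable M (c n)" and c0: "\<And>n w. 0 \<le> c n w"
    and cl: "(\<lambda>n. \<integral>w. c n w \<partial>M) \<longlonglongrightarrow> 0"
    and al: "AE w in M. (\<lambda>n. a n w) \<longlonglongrightarrow> 0"
  shows "(\<lambda>n. \<integral>w. a n w \<partial>M) \<longlonglongrightarrow> 0"
proof -
  have m: "(\<lambda>n. \<integral>w. min (a n w) (2 * B w) \<partial>M) \<longlonglongrightarrow> (\<integral>w. 0 \<partial>M)"
  proof (rule integral_dominated_convergence[where w="\<lambda>w. 2 * B w"])
    show "(\<lambda>w. 0::real) \<in> borel_measurable M" by simp
    show "(\<lambda>w. min (a n w) (2 * B w)) \<in> borel_measurable M" for n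
      using am Bi by measurable
    show "integrable M (\<lambda>w. 2 * B w)" using Bi by simp
    show "AE w in M. (\<lambda>n. min (a n w) (2 * B w)) \<longlonglongrightarrow> 0"
      using al
    proof (rule AE_mp, intro AE_I2 impI)
      fix w assume "(\<lambda>n. a n w) \<longlonglongrightarrow> 0"
      then have "(\<lambda>n. min (a n w) (2 * B w)) \<longlonglongrightarrow> min 0 (2 * B w)"
        by (intro tendsto_min tendsto_const)
      then show "(\<lambda>n. min (a n w) (2 * B w)) \<longlonglongrightarrow> 0" using B0[of w] by simp
    qed
    show "AE w in M. norm (min (a n w) (2 * B w)) \<le> 2 * B w" for n
      using a0 B0 by (intro AE_I2) auto
  qed
  have "(\<lambda>n. (\<integral>w. min (a n w) (2 * B w) \<partial>M) + 2 * (\<integral>w. c n w \<partial>M)) \<longlonglongrightarrow> 0 + 2 * 0"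
    using m cl by (intro tendsto_add tendsto_mult tendsto_const) auto
  then have l2: "(\<lambda>n. (\<integral>w. min (a n w) (2 * B w) \<partial>M) + 2 * (\<integral>w. c n w \<partial>M)) \<longlonglongrightarrow> 0" by simp
  have l1: "(\<lambda>n. 0) \<longlonglongrightarrow> (0::real)" by simp
  have e1: "\<forall>\<^sub>F n in sequentially. 0 \<le> (\<integral>w. a n w \<partial>M)"
    using a0 by (intro always_eventually allI integral_nonneg_AE AE_I2) auto
  have e2: "\<forall>\<^sub>F n in sequentially. (\<integral>w. a n w \<partial>M) \<le> (\<integral>w. min (a n w) (2 * B w) \<partial>M) + 2 * (\<integral>w. c n w \<partial>M)"
  proof (intro always_eventually allI)
    fix n
    have i1: "integrable M (\<lambda>w. min (a n w) (2 * B w))"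
      by (rule Bochner_Integration.integrable_bound[where f="\<lambda>w. 2 * B w"]) (use Bi am a0 B0 in \<open>auto intro!: AE_I2\<close>)
    have "(\<integral>w. a n w \<partial>M) \<le> (\<integral>w. min (a n w) (2 * B w) + 2 * c n w \<partial>M)"
    proof (rule integral_mono')
      show "integrable M (\<lambda>w. min (a n w) (2 * B w) + 2 * c n w)" using i1 ci by auto
      fix w
      show "a n w \<le> min (a n w) (2 * B w) + 2 * c n w" using aB[of n w] c0[of n w] a0[of n w] by (cases "a n w \<le> 2 * B w") (auto simp: min_def)
      show "0 \<le> min (a n w) (2 * B w) + 2 * c n w" using a0[of n w] B0[of w] c0[of n w] by auto
    qed
    also have "\<dots> = (\<integral>w. min (a n w) (2 * B w) \<partial>M) + 2 * (\<integral>w. c n w \<partial>M)"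
      using i1 ci by simp
    finally show "(\<integral>w. a n w \<partial>M) \<le> (\<integral>w. min (a n w) (2 * B w) \<partial>M) + 2 * (\<integral>w. c n w \<partial>M)" .
  qed
  show ?thesis by (rule tendsto_sandwich[OF e1 e2 l1 l2])
qed

lemma key:
  fixes X :: "'w \<Rightarrow> 'h::{real_normed_vector, second_countable_topology}"
    and \<Phi> :: "'h \<Rightarrow> 'h \<Rightarrow> real"
  assumes P: "prob_space M" and X: "X \<in> L2rv M"
    and \<Phi>0: "\<And>x z. 0 \<le> \<Phi> x z" and \<Phi>K: "\<And>x z. \<Phi> x z \<le> K * (1 + (norm x)\<^sup>2 + (norm z)\<^sup>2)"
    and \<Phi>c: "\<And>x b. b > 0 \<Longrightarrow> \<exists>\<delta>>0. \<forall>z. norm z < \<delta> \<longrightarrow> \<Phi> x z < b"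
    and \<Phi>m: "\<And>Z. Z \<in> L2rv M \<Longrightarrow> (\<lambda>w. \<Phi> (X w) (Z w)) \<in> borel_measurable M"
    and e: "e > 0"
  shows "\<exists>d>0. \<forall>Z\<in>L2rv M. L2norm M Z < d \<longrightarrow> (\<integral>w. \<Phi> (X w) (Z w) \<partial>M) < e"
proof (rule ccontr)
  interpret prob_space M by (rule P)
  assume neg: "\<not> ?thesis"
  have "\<forall>n. \<exists>Z. Z \<in> L2rv M \<and> L2norm M Z < 1 / Suc n \<and> e \<le> (\<integral>w. \<Phi> (X w) (Z w) \<partial>M)"
  proof
    fix n
    have "(1::real) / Suc n > 0" by simp
    then show "\<exists>Z. Z \<in> L2rv M \<and> L2norm M Z < 1 / Suc n \<and> e \<le> (\<integral>w. \<Phi> (X w) (Z w) \<partial>M)"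
      using neg[unfolded not_ex] by (metis not_less)
  qed
  then obtain Zs where Zs: "\<And>n. Zs n \<in> L2rv M" "\<And>n. L2norm M (Zs n) < 1 / Suc n"
      "\<And>n. e \<le> (\<integral>w. \<Phi> (X w) (Zs n w) \<partial>M)"
    by metis
  define u where "u = (\<lambda>n w. (norm (Zs n w))\<^sup>2)"
  have ui: "integrable M (u n)" for n using Zs(1) by (simp add: u_def L2rv_def)
  have uint: "(\<integral>w. u n w \<partial>M) = (L2norm M (Zs n))\<^sup>2" for n by (simp add: u_def L2norm_sq)
  have ul: "(\<lambda>n. \<integral>w. u n w \<partial>M) \<longlonglongrightarrow> 0"
  proof (rule tendsto_sandwich[where f="\<lambda>n. 0" and h="\<lambda>n. 1 / Suc n"])
    show "\<forall>\<^sub>F n in sequentially. 0 \<le> (\<integral>w. u n w \<partial>M)"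
      by (intro always_eventually allI integral_nonneg_AE AE_I2) (simp add: u_def)
    show "\<forall>\<^sub>F n in sequentially. (\<integral>w. u n w \<partial>M) \<le> 1 / Suc n"
    proof (intro always_eventually allI)
      fix n
      have l0: "0 \<le> L2norm M (Zs n)" by (simp add: L2norm_def)
      have "1 / real (Suc n) \<le> 1" by (simp add: divide_le_eq)
      then have l1: "L2norm M (Zs n) \<le> 1" using Zs(2)[of n] by linarith
      have "(L2norm M (Zs n))\<^sup>2 \<le> L2norm M (Zs n)" using l0 l1
        by (simp add: power2_eq_square mult_left_le)
      then show "(\<integral>w. u n w \<partial>M) \<le> 1 / Suc n" using Zs(2)[of n] uint[of n] by simp
    qed
    show "(\<lambda>n. 0) \<longlonglongrightarrow> (0::real)" by simp
    show "(\<lambda>n. 1 / real (Suc n)) \<longlonglongrightarrow> 0"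
      using LIMSEQ_inverse_real_of_nat by (simp add: inverse_eq_divide)
  qed
  have ul': "(\<lambda>n. \<integral>w. norm (u n w) \<partial>M) \<longlonglongrightarrow> 0" using ul by (simp add: u_def)
  obtain r where r: "strict_mono r" "AE w in M. (\<lambda>n. u (r n) w) \<longlonglongrightarrow> 0"
    using tendsto_L1_AE_subseq[OF ui ul'] by blast
  define a where "a = (\<lambda>n w. \<Phi> (X w) (Zs (r n) w))"
  have al: "AE w in M. (\<lambda>n. a n w) \<longlonglongrightarrow> 0"
    using r(2)
  proof (rule AE_mp, intro AE_I2 impI)
    fix w assume "(\<lambda>n. u (r n) w) \<longlonglongrightarrow> 0"
    then have "(\<lambda>n. sqrt (u (r n) w)) \<longlonglongrightarrow> sqrt 0" by (rule tendsto_real_sqrt)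
    then have z: "(\<lambda>n. norm (Zs (r n) w)) \<longlonglongrightarrow> 0" by (simp add: u_def)
    show "(\<lambda>n. a n w) \<longlonglongrightarrow> 0"
    proof (rule order_tendstoI)
      fix b :: real assume "b < 0"
      then show "\<forall>\<^sub>F n in sequentially. b < a n w"
      proof (intro always_eventually allI)
        fix n show "b < a n w" using \<open>b < 0\<close> \<Phi>0[of "X w" "Zs (r n) w"] by (simp add: a_def)
      qed
    next
      fix b :: real assume "0 < b"
      then obtain \<delta> where \<delta>: "\<delta> > 0" "\<forall>z. norm z < \<delta> \<longrightarrow> \<Phi> (X w) z < b" using \<Phi>c by blast
      have "\<forall>\<^sub>F n in sequentially. norm (Zs (r n) w) < \<delta>" using order_tendstoD(2)[OF z \<delta>(1)] .
      then show "\<forall>\<^sub>F n in sequentially. a n w < b"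
        by eventually_elim (simp add: a_def \<delta>(2))
    qed
  qed
  have K0: "K \<ge> 0"
  proof -
    have "0 \<le> K * (1 + (norm (0::'h))\<^sup>2 + (norm (0::'h))\<^sup>2)" using \<Phi>0[of 0 0] \<Phi>K[of 0 0] by linarith
    then show ?thesis by simp
  qed
  have lim: "(\<lambda>n. \<integral>w. a n w \<partial>M) \<longlonglongrightarrow> 0"
  proof (rule gdct[where B="\<lambda>w. K * (1 + (norm (X w))\<^sup>2)" and c="\<lambda>n w. K * u (r n) w"])
    show "a n \<in> borel_measurable M" for n unfolding a_def using \<Phi>m[OF Zs(1)] .
    show "0 \<le> a n w" for n w unfolding a_def by (rule \<Phi>0)
    show "a n w \<le> K * (1 + (norm (X w))\<^sup>2) + K * u (r n) w" for n w
      unfolding a_def u_def using \<Phi>K[of "X w" "Zs (r n) w"] by (simp add: algebra_simps)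
    show "integrable M (\<lambda>w. K * (1 + (norm (X w))\<^sup>2))" using X by (auto simp: L2rv_def)
    show "0 \<le> K * (1 + (norm (X w))\<^sup>2)" for w using K0 by simp
    show "integrable M (\<lambda>w. K * u (r n) w)" for n using ui by simp
    show "0 \<le> K * u (r n) w" for n w using K0 by (simp add: u_def)
    have "(\<lambda>n. \<integral>w. u (r n) w \<partial>M) \<longlonglongrightarrow> 0"
      using LIMSEQ_subseq_LIMSEQ[OF ul r(1)] by (simp add: o_def)
    then show "(\<lambda>n. \<integral>w. K * u (r n) w \<partial>M) \<longlonglongrightarrow> 0"
      using tendsto_mult_right_zero[of _ sequentially K] by simp
    show "AE w in M. (\<lambda>n. a n w) \<longlonglongrightarrow> 0" by (rule al)
  qed
  from order_tendstoD(2)[OF lim e] obtain N where "\<And>n. n \<ge> N \<Longrightarrow> (\<integral>w. a n w \<partial>M) < e"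
    by (auto simp: eventually_sequentially)
  then have "(\<integral>w. a N w \<partial>M) < e" by simp
  with Zs(3)[of "r N"] show False by (simp add: a_def)
qed

locale lset =
  fixes M :: "'w measure" and h :: "'h::{real_inner, polish_space} \<Rightarrow> 'h"
    and Dh :: "'h \<Rightarrow> ('h \<Rightarrow>\<^sub>L 'h)" and C :: real
  assumes P: "prob_space M" and sp: "space M = UNIV"
    and deriv: "\<And>u. (h has_derivative blinfun_apply (Dh u)) (at u)"
    and cont: "continuous_on UNIV Dh"
    and growth: "\<And>u v. norm v = 1 \<Longrightarrow> norm (blinfun_apply (Dh u) v) \<le> C * (1 + norm u)"

context lset
begin

lemma Dh_apply_bound: "norm (Dh u v) \<le> max C 0 * (1 + norm u) * norm v"
proof (cases "v = 0")
  case True then show ?thesis by simp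
next
  case False
  have n: "norm (v /\<^sub>R norm v) = 1" using False by simp
  have "Dh u v = norm v *\<^sub>R Dh u (v /\<^sub>R norm v)" using False by (simp add: blinfun.scaleR_right)
  then have "norm (Dh u v) = norm v * norm (Dh u (v /\<^sub>R norm v))" by simp
  also have "\<dots> \<le> norm v * (C * (1 + norm u))" using growth[OF n] by (simp add: mult_left_mono)
  also have "\<dots> \<le> norm v * (max C 0 * (1 + norm u))" by (intro mult_left_mono mult_right_mono) auto
  finally show ?thesis by (simp add: mult_ac)
qed

lemma Dh_norm: "norm (Dh u) \<le> max C 0 * (1 + norm u)"
  by (rule norm_blinfun_bound) (auto simp: Dh_apply_bound)

lemma h_cont: "continuous_on UNIV h"
  using deriv has_derivative_continuous continuous_at_imp_continuous_on by blast

lemma h_meas: "h \<in> borel_measurable borel"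
  using h_cont borel_measurable_continuous_onI by blast

lemma meas_pair:
  assumes "X \<in> borel_measurable M" "Y \<in> borel_measurable M"
    and "continuous_on UNIV (g :: 'h \<times> 'h \<Rightarrow> 'c::topological_space)"
  shows "(\<lambda>w. g (X w, Y w)) \<in> borel_measurable M"
proof -
  have "g \<in> borel_measurable (borel \<Otimes>\<^sub>M borel)"
    using borel_measurable_continuous_onI[OF assms(3)] by (simp add: borel_prod)
  then show ?thesis using measurable_compose[OF measurable_Pair[OF assms(1,2)]] by blast
qed

lemma meas_comp:
  assumes "X \<in> borel_measurable M" "continuous_on UNIV (g :: 'h \<Rightarrow> 'c::topological_space)"
  shows "(\<lambda>w. g (X w)) \<in> borel_measurable M"
  using measurable_compose[OF assms(1) borel_measurable_continuous_onI[OF assms(2)]] .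

lemma cont_fst: "continuous_on UNIV (\<lambda>p::'h\<times>'h. Dh (fst p))"
  by (rule continuous_on_compose2[OF cont]) (auto intro: continuous_on_fst continuous_on_id)

lemma cont_snd: "continuous_on UNIV (\<lambda>p::'h\<times>'h. Dh (snd p))"
  by (rule continuous_on_compose2[OF cont]) (auto intro: continuous_on_snd continuous_on_id)

lemma meas_apply:
  assumes "X \<in> borel_measurable M" "Y \<in> borel_measurable M"
  shows "(\<lambda>w. Dh (X w) (Y w)) \<in> borel_measurable M"
proof -
  have "continuous_on UNIV (\<lambda>p::'h\<times>'h. Dh (fst p) (snd p))"
    by (rule blinfun.continuous_on[OF cont_fst]) (auto intro: continuous_on_snd continuous_on_id)
  from meas_pair[OF assms this] show ?thesis by simp
qed

end

context lset
begin

lemma Cp0: "0 \<le> max C 0" by simp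

lemma h_bound: "norm (h u) \<le> norm (h 0) + max C 0 * (1 + norm u) * norm u"
proof -
  have "norm (h u - h 0) \<le> max C 0 * (1 + norm u) * norm (u - 0)"
  proof (rule differentiable_bound[where S="closed_segment 0 u" and f'="\<lambda>z. blinfun_apply (Dh z)"])
    show "convex (closed_segment 0 u)" by (rule convex_closed_segment)
    show "(h has_derivative blinfun_apply (Dh z)) (at z within closed_segment 0 u)" for z
      using deriv by (rule has_derivative_at_withinI)
    show "u \<in> closed_segment 0 u" "0 \<in> closed_segment 0 u" by auto
    fix z assume z: "z \<in> closed_segment 0 u"
    have "norm z \<le> norm u" using segment_bound1[OF z] by simp
    then have "norm (Dh z) \<le> max C 0 * (1 + norm u)"
      using Dh_norm[of z] by (meson add_left_mono max.cobounded2 mult_left_mono order_trans)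
    then show "onorm (blinfun_apply (Dh z)) \<le> max C 0 * (1 + norm u)"
      by (simp add: norm_blinfun.rep_eq)
  qed
  then show ?thesis using norm_triangle_ineq2[of "h u" "h 0"] by simp
qed

lemma h_bound2: "norm (h u) \<le> norm (h 0) + max C 0 + 2 * max C 0 * (norm u)\<^sup>2"
proof -
  have a: "norm u \<le> 1 + (norm u)\<^sup>2"
  proof (cases "norm u \<le> 1")
    case True
    have "0 \<le> (norm u)\<^sup>2" by simp
    with True show ?thesis by linarith
  next
    case False
    then have "norm u * 1 \<le> norm u * norm u" by (intro mult_left_mono) auto
    then show ?thesis by (simp add: power2_eq_square)
  qed
  have "max C 0 * (1 + norm u) * norm u = max C 0 * (norm u + (norm u)\<^sup>2)"
    by (simp add: algebra_simps power2_eq_square)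
  also have "\<dots> \<le> max C 0 * (1 + 2 * (norm u)\<^sup>2)"
    using a by (intro mult_left_mono) auto
  finally show ?thesis using h_bound[of u] by (simp add: algebra_simps)
qed

lemma h_int:
  assumes X: "X \<in> L2rv M"
  shows "integrable M (\<lambda>w. h (X w))"
proof -
  interpret prob_space M by (rule P)
  show ?thesis
  proof (rule integrable_bound_h[where f="\<lambda>w. norm (h 0) + max C 0 + 2 * max C 0 * (norm (X w))\<^sup>2"])
    show "integrable M (\<lambda>w. norm (h 0) + max C 0 + 2 * max C 0 * (norm (X w))\<^sup>2)"
      using X by (auto simp: L2rv_def)
    show "(\<lambda>w. h (X w)) \<in> borel_measurable M"
      using X h_meas by (auto simp: L2rv_def intro: measurable_compose)
    show "AE w in M. norm (h (X w)) \<le> norm (norm (h 0) + max C 0 + 2 * max C 0 * (norm (X w))\<^sup>2)"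
      by (intro AE_I2) (use h_bound2 in \<open>auto\<close>)
  qed
qed

lemma lift_eq:
  assumes "X \<in> borel_measurable M"
  shows "lift M (\<lambda>\<mu>. integral\<^sup>L \<mu> h) X = (\<integral>w. h (X w) \<partial>M)"
  unfolding lift_def using integral_distr_h[OF assms h_meas] .

lemma normDh_meas:
  assumes "X \<in> borel_measurable M"
  shows "(\<lambda>w. norm (Dh (X w))) \<in> borel_measurable M"
  by (rule meas_comp[OF assms]) (intro continuous_on_norm cont)

lemma DhX_sq_int:
  assumes X: "X \<in> L2rv M"
  shows "integrable M (\<lambda>w. (norm (Dh (X w)))\<^sup>2)"
proof -
  interpret prob_space M by (rule P)
  have Xm: "X \<in> borel_measurable M" using X by (simp add: L2rv_def)
  show ?thesis
  proof (rule Bochner_Integration.integrable_bound[where f="\<lambda>w. 2 * (max C 0)\<^sup>2 * (1 + (norm (X w))\<^sup>2)"])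
    show "integrable M (\<lambda>w. 2 * (max C 0)\<^sup>2 * (1 + (norm (X w))\<^sup>2))"
      using X by (auto simp: L2rv_def)
    show "(\<lambda>w. (norm (Dh (X w)))\<^sup>2) \<in> borel_measurable M"
      using normDh_meas[OF Xm] by simp
    show "AE w in M. norm ((norm (Dh (X w)))\<^sup>2) \<le> norm (2 * (max C 0)\<^sup>2 * (1 + (norm (X w))\<^sup>2))"
    proof (intro AE_I2)
      fix w
      have "(norm (Dh (X w)))\<^sup>2 \<le> (max C 0 * (1 + norm (X w)))\<^sup>2"
        using Dh_norm[of "X w"] by (simp add: power_mono)
      also have "\<dots> = (max C 0)\<^sup>2 * (1 + norm (X w))\<^sup>2" by (simp add: power_mult_distrib)
      also have "\<dots> \<le> (max C 0)\<^sup>2 * (2 * (1 + (norm (X w))\<^sup>2))"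
      proof (intro mult_left_mono)
        have s: "2 * 1 * norm (X w) \<le> 1\<^sup>2 + (norm (X w))\<^sup>2" by (rule sum_squares_bound)
        have "(1 + norm (X w))\<^sup>2 = 1\<^sup>2 + (norm (X w))\<^sup>2 + 2 * 1 * norm (X w)" by (rule power2_sum)
        with s show "(1 + norm (X w))\<^sup>2 \<le> 2 * (1 + (norm (X w))\<^sup>2)" by simp
      qed simp
      finally show "norm ((norm (Dh (X w)))\<^sup>2) \<le> norm (2 * (max C 0)\<^sup>2 * (1 + (norm (X w))\<^sup>2))"
        by (simp add: algebra_simps)
    qed
  qed
qed

end

context lset
begin

lemma DhXY_int:
  assumes X: "X \<in> L2rv M" and Y: "Y \<in> L2rv M"
  shows "integrable M (\<lambda>w. Dh (X w) (Y w))"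
proof (rule integrable_bound_h[where f="\<lambda>w. norm (Dh (X w)) * norm (Y w)"])
  have Xm: "X \<in> borel_measurable M" and Ym: "Y \<in> borel_measurable M" using X Y by (auto simp: L2rv_def)
  show "integrable M (\<lambda>w. norm (Dh (X w)) * norm (Y w))"
    by (rule prod_sq_integrable[OF normDh_meas[OF Xm]]) (use Ym Y DhX_sq_int[OF X] in \<open>auto simp: L2rv_def\<close>)
  show "(\<lambda>w. Dh (X w) (Y w)) \<in> borel_measurable M" by (rule meas_apply[OF Xm Ym])
  show "AE w in M. norm (Dh (X w) (Y w)) \<le> norm (norm (Dh (X w)) * norm (Y w))"
    by (intro AE_I2) (simp add: norm_blinfun)
qed

lemma DhXY_bound:
  assumes X: "X \<in> L2rv M" and Y: "Y \<in> L2rv M"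
  shows "norm (\<integral>w. Dh (X w) (Y w) \<partial>M) \<le> sqrt (\<integral>w. (norm (Dh (X w)))\<^sup>2 \<partial>M) * L2norm M Y"
proof -
  have Xm: "X \<in> borel_measurable M" and Ym: "Y \<in> borel_measurable M" using X Y by (auto simp: L2rv_def)
  have pi: "integrable M (\<lambda>w. norm (Dh (X w)) * norm (Y w))"
    by (rule prod_sq_integrable[OF normDh_meas[OF Xm]]) (use Ym Y DhX_sq_int[OF X] in \<open>auto simp: L2rv_def\<close>)
  have "norm (\<integral>w. Dh (X w) (Y w) \<partial>M) \<le> (\<integral>w. norm (Dh (X w) (Y w)) \<partial>M)"
    by (rule integral_norm_bound_h)
  also have "\<dots> \<le> (\<integral>w. \<bar>norm (Dh (X w)) * norm (Y w)\<bar> \<partial>M)"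
    by (rule integral_mono') (use pi in \<open>auto simp: norm_blinfun\<close>)
  also have "\<dots> \<le> sqrt (\<integral>w. (norm (Dh (X w)))\<^sup>2 \<partial>M) * sqrt (\<integral>w. (norm (Y w))\<^sup>2 \<partial>M)"
    by (rule cs_integral[OF normDh_meas[OF Xm]]) (use Ym Y DhX_sq_int[OF X] in \<open>auto simp: L2rv_def\<close>)
  finally show ?thesis by (simp add: L2norm_def)
qed

definition Qf where "Qf x y = norm (h (x + y) - h x - Dh x y) / norm y"

lemma rem_bound:
  assumes B: "\<And>t. 0 \<le> t \<Longrightarrow> t \<le> 1 \<Longrightarrow> norm (Dh (x + t *\<^sub>R y) - Dh x) \<le> B"
  shows "norm (h (x + y) - h x - Dh x y) \<le> norm y * B"
proof -
  have "norm (h (x + y) - h x - Dh x ((x + y) - x)) \<le> norm ((x + y) - x) * B"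
  proof (rule differentiable_bound_linearization[where S="{x + t *\<^sub>R y | t. t \<in> {0..1}}"
        and f'="\<lambda>z. blinfun_apply (Dh z)"])
    show "x + t *\<^sub>R (x + y - x) \<in> {x + t *\<^sub>R y | t. t \<in> {0..1}}" if "t \<in> {0..1}" for t
      using that by auto
    show "(h has_derivative blinfun_apply (Dh z)) (at z within {x + t *\<^sub>R y | t. t \<in> {0..1}})" for z
      using deriv by (rule has_derivative_at_withinI)
    show "x \<in> {x + t *\<^sub>R y | t. t \<in> {0..1}}"
      by (rule CollectI, rule exI[of _ 0]) simp
    fix z assume "z \<in> {x + t *\<^sub>R y | t. t \<in> {0..1}}"
    then obtain t where t: "0 \<le> t" "t \<le> 1" "z = x + t *\<^sub>R y" by auto
    have "blinfun_apply (Dh z) - blinfun_apply (Dh x) = blinfun_apply (Dh z - Dh x)"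
      by (simp add: fun_eq_iff blinfun.diff_left)
    then show "onorm (blinfun_apply (Dh z) - blinfun_apply (Dh x)) \<le> B"
      using B[OF t(1,2)] t(3) by (simp add: norm_blinfun.rep_eq)
  qed
  then show ?thesis by simp
qed

lemma Qf_nonneg: "0 \<le> Qf x y" by (simp add: Qf_def)

lemma Qf_bound: "Qf x y \<le> max C 0 * (2 + 2 * norm x + norm y)"
proof (cases "y = 0")
  case True then show ?thesis by (simp add: Qf_def)
next
  case False
  have "norm (h (x + y) - h x - Dh x y) \<le> norm y * (max C 0 * (2 + 2 * norm x + norm y))"
  proof (rule rem_bound)
    fix t :: real assume t: "0 \<le> t" "t \<le> 1"
    have ty: "t * norm y \<le> norm y" using t by (simp add: mult_left_le_one_le)
    have "norm (x + t *\<^sub>R y) \<le> norm x + norm y"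
      using norm_triangle_ineq[of x "t *\<^sub>R y"] t ty by simp
    then have a: "norm (Dh (x + t *\<^sub>R y)) \<le> max C 0 * (1 + norm x + norm y)"
      using Dh_norm[of "x + t *\<^sub>R y"] by (smt (verit, best) Cp0 mult_left_mono)
    have "norm (Dh (x + t *\<^sub>R y) - Dh x) \<le> norm (Dh (x + t *\<^sub>R y)) + norm (Dh x)"
      by (rule norm_triangle_ineq4)
    also have "\<dots> \<le> max C 0 * (1 + norm x + norm y) + max C 0 * (1 + norm x)"
      using a Dh_norm[of x] by linarith
    also have "\<dots> = max C 0 * (2 + 2 * norm x + norm y)" by (simp add: algebra_simps)
    finally show "norm (Dh (x + t *\<^sub>R y) - Dh x) \<le> max C 0 * (2 + 2 * norm x + norm y)" .
  qed
  then show ?thesis using False unfolding Qf_def by (simp add: divide_le_eq mult.commute)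
qed

lemma sq3: "(p + q + r)\<^sup>2 \<le> 3 * (p\<^sup>2 + q\<^sup>2 + (r::real)\<^sup>2)"
proof -
  have eq: "3 * (p\<^sup>2 + q\<^sup>2 + r\<^sup>2) - (p + q + r)\<^sup>2 = (p - q)\<^sup>2 + (q - r)\<^sup>2 + (p - r)\<^sup>2"
    by (simp add: power2_eq_square algebra_simps)
  have "0 \<le> (p - q)\<^sup>2 + (q - r)\<^sup>2 + (p - r)\<^sup>2" by simp
  with eq show ?thesis by linarith
qed

lemma Qf_sq_bound: "(Qf x y)\<^sup>2 \<le> 12 * (max C 0)\<^sup>2 * (1 + (norm x)\<^sup>2 + (norm y)\<^sup>2)"
proof -
  have "(Qf x y)\<^sup>2 \<le> (max C 0 * (2 + 2 * norm x + norm y))\<^sup>2"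
    using Qf_bound[of x y] Qf_nonneg[of x y] by (simp add: power_mono)
  also have "\<dots> = (max C 0)\<^sup>2 * (2 + 2 * norm x + norm y)\<^sup>2" by (simp add: power_mult_distrib)
  also have "\<dots> \<le> (max C 0)\<^sup>2 * (3 * (2\<^sup>2 + (2 * norm x)\<^sup>2 + (norm y)\<^sup>2))"
    by (intro mult_left_mono sq3) simp
  also have "\<dots> \<le> 12 * (max C 0)\<^sup>2 * (1 + (norm x)\<^sup>2 + (norm y)\<^sup>2)"
    by (simp add: algebra_simps power_mult_distrib)
  finally show ?thesis .
qed

lemma Qf_small:
  assumes b: "b > 0"
  shows "\<exists>\<delta>>0. \<forall>y. norm y < \<delta> \<longrightarrow> (Qf x y)\<^sup>2 < b"
proof -
  have sb: "sqrt b / 2 > 0" using b by simp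
  from cont[unfolded continuous_on_iff] sb obtain \<delta> where \<delta>: "\<delta> > 0"
    "\<And>x'. dist x' x < \<delta> \<Longrightarrow> dist (Dh x') (Dh x) < sqrt b / 2"
    by blast
  show ?thesis
  proof (intro exI[of _ \<delta>] conjI allI impI)
    show "\<delta> > 0" by (rule \<delta>(1))
    fix y :: 'h assume y: "norm y < \<delta>"
    have "Qf x y \<le> sqrt b / 2"
    proof (cases "y = 0")
      case True then show ?thesis using sb by (simp add: Qf_def)
    next
      case False
      have "norm (h (x + y) - h x - Dh x y) \<le> norm y * (sqrt b / 2)"
      proof (rule rem_bound)
        fix t :: real assume t: "0 \<le> t" "t \<le> 1"
        have "dist (x + t *\<^sub>R y) x = t * norm y" using t by (simp add: dist_norm)
        also have "\<dots> \<le> norm y" using t by (simp add: mult_left_le_one_le)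
        finally have "dist (x + t *\<^sub>R y) x < \<delta>" using y by simp
        from \<delta>(2)[OF this] show "norm (Dh (x + t *\<^sub>R y) - Dh x) \<le> sqrt b / 2"
          by (simp add: dist_norm)
      qed
      then show ?thesis using False unfolding Qf_def by (simp add: divide_le_eq mult.commute)
    qed
    then have "(Qf x y)\<^sup>2 \<le> (sqrt b / 2)\<^sup>2" using Qf_nonneg[of x y] by (simp add: power_mono)
    also have "\<dots> = b / 4" using b by (simp add: power_divide)
    also have "\<dots> < b" using b by simp
    finally show "(Qf x y)\<^sup>2 < b" .
  qed
qed

lemma Qf_meas:
  assumes Xm: "X \<in> borel_measurable M" and Ym: "Y \<in> borel_measurable M"
  shows "(\<lambda>w. Qf (X w) (Y w)) \<in> borel_measurable M"
proof -
  have XY: "(\<lambda>w. X w + Y w) \<in> borel_measurable M" using Xm Ym by simp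
  have [measurable]: "(\<lambda>w. h (X w + Y w)) \<in> borel_measurable M" by (rule meas_comp[OF XY h_cont])
  have [measurable]: "(\<lambda>w. h (X w)) \<in> borel_measurable M" by (rule meas_comp[OF Xm h_cont])
  have [measurable]: "(\<lambda>w. Dh (X w) (Y w)) \<in> borel_measurable M" by (rule meas_apply[OF Xm Ym])
  have [measurable]: "Y \<in> borel_measurable M" by (rule Ym)
  show ?thesis unfolding Qf_def by measurable
qed

end

lemma frechet_unique:
  fixes F :: "('w \<Rightarrow> 'h::{real_normed_vector, second_countable_topology}) \<Rightarrow> 'h"
  assumes F1: "frechet_L2 M F X L" and F2: "frechet_L2 M F X L'" and Y: "Y \<in> L2rv M"
  shows "L Y = L' Y"
proof -
  define N where "N = L2norm M Y"
  have N0: "N \<ge> 0" by (simp add: N_def L2norm_def)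
  have "norm (L Y - L' Y) \<le> 0 + e" if e: "e > 0" for e
  proof -
    define \<epsilon> where "\<epsilon> = e / (2 * (N + 1))"
    have \<epsilon>p: "\<epsilon> > 0" using e N0 by (simp add: \<epsilon>_def)
    from F1[unfolded frechet_L2_def] \<epsilon>p obtain d1 where d1: "d1 > 0"
      "\<forall>Y\<in>L2rv M. L2norm M Y < d1 \<longrightarrow> norm (F (\<lambda>w. X w + Y w) - F X - L Y) \<le> \<epsilon> * L2norm M Y"
      and sc1: "\<forall>Y\<in>L2rv M. \<forall>c::real. L (\<lambda>w. c *\<^sub>R Y w) = c *\<^sub>R L Y"
      by blast
    from F2[unfolded frechet_L2_def] \<epsilon>p obtain d2 where d2: "d2 > 0"
      "\<forall>Y\<in>L2rv M. L2norm M Y < d2 \<longrightarrow> norm (F (\<lambda>w. X w + Y w) - F X - L' Y) \<le> \<epsilon> * L2norm M Y"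
      and sc2: "\<forall>Y\<in>L2rv M. \<forall>c::real. L' (\<lambda>w. c *\<^sub>R Y w) = c *\<^sub>R L' Y"
      by blast
    define t where "t = min d1 d2 / (N + 1)"
    have tp: "t > 0" using d1 d2 N0 by (simp add: t_def)
    have tN: "t * N < min d1 d2"
    proof -
      have "t * N = min d1 d2 * (N / (N + 1))" by (simp add: t_def)
      also have "\<dots> < min d1 d2 * 1" using d1 d2 N0 by (intro mult_strict_left_mono) auto
      finally show ?thesis by simp
    qed
    define Yt where "Yt = (\<lambda>w. t *\<^sub>R Y w)"
    have Yt: "Yt \<in> L2rv M" unfolding Yt_def by (rule L2rv_scale[OF Y])
    have nYt: "L2norm M Yt = t * N" using tp by (simp add: Yt_def L2norm_scale N_def)
    define A where "A = F (\<lambda>w. X w + Yt w) - F X"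
    have a1: "norm (A - L Yt) \<le> \<epsilon> * (t * N)" using d1(2) Yt nYt tN unfolding A_def by auto
    have a2: "norm (A - L' Yt) \<le> \<epsilon> * (t * N)" using d2(2) Yt nYt tN unfolding A_def by auto
    have "L Yt - L' Yt = (A - L' Yt) - (A - L Yt)" by simp
    then have "norm (L Yt - L' Yt) \<le> norm (A - L' Yt) + norm (A - L Yt)"
      using norm_triangle_ineq4 by metis
    also have "\<dots> \<le> t * (2 * \<epsilon> * N)" using a1 a2 by (simp add: algebra_simps)
    finally have b: "norm (L Yt - L' Yt) \<le> t * (2 * \<epsilon> * N)" .
    have "L Yt - L' Yt = t *\<^sub>R (L Y - L' Y)"
      using sc1 sc2 Y unfolding Yt_def by (simp add: scaleR_diff_right)
    then have "t * norm (L Y - L' Y) \<le> t * (2 * \<epsilon> * N)" using b tp by simp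
    then have c: "norm (L Y - L' Y) \<le> 2 * \<epsilon> * N" using tp by simp
    have "2 * \<epsilon> * N = e * (N / (N + 1))" using N0 by (simp add: \<epsilon>_def field_simps)
    also have "\<dots> \<le> e * 1" using e N0 by (intro mult_left_mono) auto
    finally show ?thesis using c by simp
  qed
  then have "norm (L Y - L' Y) \<le> 0" by (rule field_le_epsilon)
  then show ?thesis by simp
qed

lemma disj_sum_norm:
  fixes x :: "nat \<Rightarrow> 'a::real_normed_vector"
  assumes I: "finite I" and dj: "disjoint_family_on A I"
  shows "(\<Sum>i\<in>I. indicator (A i) w * norm (x i)) = norm (\<Sum>i\<in>I. indicator (A i) w *\<^sub>R x i)"
proof (cases "\<exists>j\<in>I. w \<in> A j")
  case True
  then obtain j where j: "j \<in> I" "w \<in> A j" by blast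
  have o: "w \<notin> A i" if "i \<in> I - {j}" for i
    using dj j that unfolding disjoint_family_on_def by blast
  have s1: "(\<Sum>i\<in>I. indicator (A i) w * norm (x i)) = norm (x j)"
  proof -
    have "(\<Sum>i\<in>I. indicator (A i) w * norm (x i)) = indicator (A j) w * norm (x j) + (\<Sum>i\<in>I - {j}. indicator (A i) w * norm (x i))"
      by (rule sum.remove[OF I j(1)])
    also have "(\<Sum>i\<in>I - {j}. indicator (A i) w * norm (x i)) = 0"
      by (rule sum.neutral) (use o in auto)
    finally show ?thesis using j by simp
  qed
  have s2: "(\<Sum>i\<in>I. indicator (A i) w *\<^sub>R x i) = x j"
  proof -
    have "(\<Sum>i\<in>I. indicator (A i) w *\<^sub>R x i) = indicator (A j) w *\<^sub>R x j + (\<Sum>i\<in>I - {j}. indicator (A i) w *\<^sub>R x i)"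
      by (rule sum.remove[OF I j(1)])
    also have "(\<Sum>i\<in>I - {j}. indicator (A i) w *\<^sub>R x i) = 0"
      by (rule sum.neutral) (use o in auto)
    finally show ?thesis using j by simp
  qed
  show ?thesis using s1 s2 by simp
next
  case False
  then show ?thesis by (simp add: indicator_def)
qed

context lset
begin

lemma L2rv_ind:
  assumes A: "A \<in> sets M"
  shows "(\<lambda>w. indicator A w *\<^sub>R x) \<in> L2rv M"
proof -
  interpret prob_space M by (rule P)
  have m: "(\<lambda>w. indicator A w *\<^sub>R x) \<in> borel_measurable M" using A by simp
  have "integrable M (\<lambda>w. (norm (indicator A w *\<^sub>R x))\<^sup>2)"
  proof (rule Bochner_Integration.integrable_bound[where f="\<lambda>w. (norm x)\<^sup>2"])
    show "integrable M (\<lambda>w. (norm x)\<^sup>2)" by simp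
    have "(\<lambda>w. norm (indicator A w *\<^sub>R x)) \<in> borel_measurable M"
      by (rule measurable_compose[OF m borel_measurable_norm])
    then show "(\<lambda>w. (norm (indicator A w *\<^sub>R x))\<^sup>2) \<in> borel_measurable M"
      by (rule borel_measurable_power)
    show "AE w in M. norm ((norm (indicator A w *\<^sub>R x))\<^sup>2) \<le> norm ((norm x)\<^sup>2)"
      by (intro AE_I2) (simp add: indicator_def)
  qed
  with m show ?thesis by (simp add: L2rv_def)
qed

lemma trinorm_bound:
  fixes G :: "'w \<Rightarrow> ('h \<Rightarrow>\<^sub>L 'h)" and Lf :: "('w \<Rightarrow> 'h) \<Rightarrow> 'h"
  assumes Gn: "(\<lambda>w. norm (G w)) \<in> borel_measurable M"
    and Gx: "\<And>x. (\<lambda>w. G w x) \<in> borel_measurable M"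
    and Gi: "integrable M (\<lambda>w. (norm (G w))\<^sup>2)"
    and Lf: "\<And>A x. A \<in> sets M \<Longrightarrow> Lf (\<lambda>w. indicator A w *\<^sub>R x) = (\<integral>w. indicator A w *\<^sub>R G w x \<partial>M)"
  shows "trinorm M Lf \<le> ennreal (sqrt (\<integral>w. (norm (G w))\<^sup>2 \<partial>M))"
  unfolding trinorm_def
proof (rule Sup_least)
  interpret prob_space M by (rule P)
  fix z assume "z \<in> {ennreal (\<Sum>i\<in>I. norm (Lf (\<lambda>w. indicator (A i) w *\<^sub>R x i))) | I A x.
       finite (I::nat set) \<and> (\<forall>i\<in>I. A i \<in> sets M) \<and> disjoint_family_on A I \<and>
       integral\<^sup>L M (\<lambda>w. (norm (\<Sum>i\<in>I. indicator (A i) w *\<^sub>R x i))\<^sup>2) \<le> 1}"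
  then obtain I A x where I: "finite (I::nat set)" and A: "\<forall>i\<in>I. A i \<in> sets M"
    and dj: "disjoint_family_on A I"
    and n1: "(\<integral>w. (norm (\<Sum>i\<in>I. indicator (A i) w *\<^sub>R x i))\<^sup>2 \<partial>M) \<le> 1"
    and z: "z = ennreal (\<Sum>i\<in>I. norm (Lf (\<lambda>w. indicator (A i) w *\<^sub>R x i)))"
    by blast
  define S where "S = (\<lambda>w. \<Sum>i\<in>I. indicator (A i) w *\<^sub>R x i)"
  have Sm: "S \<in> borel_measurable M" unfolding S_def
    by (intro borel_measurable_sum borel_measurable_scaleR borel_measurable_indicator borel_measurable_const) (use A in auto)
  have Snorm: "norm (S w) \<le> (\<Sum>i\<in>I. norm (x i))" for w
  proof -
    have "norm (S w) \<le> (\<Sum>i\<in>I. norm (indicator (A i) w *\<^sub>R x i))" unfolding S_def by (rule norm_sum)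
    also have "\<dots> \<le> (\<Sum>i\<in>I. norm (x i))" by (intro sum_mono) (simp add: indicator_def)
    finally show ?thesis .
  qed
  have Si: "integrable M (\<lambda>w. (norm (S w))\<^sup>2)"
  proof (rule Bochner_Integration.integrable_bound[where f="\<lambda>w. (\<Sum>i\<in>I. norm (x i))\<^sup>2"])
    show "integrable M (\<lambda>w. (\<Sum>i\<in>I. norm (x i))\<^sup>2)" by simp
    show "(\<lambda>w. (norm (S w))\<^sup>2) \<in> borel_measurable M" using Sm by simp
    show "AE w in M. norm ((norm (S w))\<^sup>2) \<le> norm ((\<Sum>i\<in>I. norm (x i))\<^sup>2)"
      by (intro AE_I2) (simp add: power_mono Snorm)
  qed
  have Gni: "integrable M (\<lambda>w. norm (G w))"
    using prod_sq_integrable[OF Gn, of "\<lambda>w. 1"] Gi by simp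
  have trm: "norm (Lf (\<lambda>w. indicator (A i) w *\<^sub>R x i)) \<le> (\<integral>w. norm (x i) * (norm (G w) * indicator (A i) w) \<partial>M)"
    if i: "i \<in> I" for i
  proof -
    have "norm (Lf (\<lambda>w. indicator (A i) w *\<^sub>R x i)) = norm (\<integral>w. indicator (A i) w *\<^sub>R G w (x i) \<partial>M)"
      using Lf A i by simp
    also have "\<dots> \<le> (\<integral>w. norm (indicator (A i) w *\<^sub>R G w (x i)) \<partial>M)" by (rule integral_norm_bound_h)
    also have "\<dots> \<le> (\<integral>w. norm (x i) * (norm (G w) * indicator (A i) w) \<partial>M)"
    proof (rule integral_mono')
      show "integrable M (\<lambda>w. norm (x i) * (norm (G w) * indicator (A i) w))"
        using A i Gni by (intro integrable_mult_right integrable_real_mult_indicator) auto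
      fix w
      show "norm (indicator (A i) w *\<^sub>R G w (x i)) \<le> norm (x i) * (norm (G w) * indicator (A i) w)"
        using norm_blinfun[of "G w" "x i"] by (simp add: indicator_def mult_ac)
      show "0 \<le> norm (x i) * (norm (G w) * indicator (A i) w)" by simp
    qed
    finally show ?thesis .
  qed
  have "(\<Sum>i\<in>I. norm (Lf (\<lambda>w. indicator (A i) w *\<^sub>R x i))) \<le> (\<Sum>i\<in>I. \<integral>w. norm (x i) * (norm (G w) * indicator (A i) w) \<partial>M)"
    by (rule sum_mono) (rule trm)
  also have "\<dots> = (\<integral>w. (\<Sum>i\<in>I. norm (x i) * (norm (G w) * indicator (A i) w)) \<partial>M)"
    by (subst Bochner_Integration.integral_sum) (use A Gni in \<open>auto intro!: integrable_mult_right integrable_real_mult_indicator\<close>)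
  also have "\<dots> = (\<integral>w. \<bar>norm (G w) * norm (S w)\<bar> \<partial>M)"
  proof (rule Bochner_Integration.integral_cong[OF refl])
    fix w
    have "(\<Sum>i\<in>I. norm (x i) * (norm (G w) * indicator (A i) w)) = norm (G w) * (\<Sum>i\<in>I. indicator (A i) w * norm (x i))"
      by (simp add: sum_distrib_left mult_ac)
    also have "\<dots> = norm (G w) * norm (S w)" unfolding S_def using disj_sum_norm[OF I dj, where w=w and x=x] by simp
    finally show "(\<Sum>i\<in>I. norm (x i) * (norm (G w) * indicator (A i) w)) = \<bar>norm (G w) * norm (S w)\<bar>" by simp
  qed
  also have "\<dots> \<le> sqrt (\<integral>w. (norm (G w))\<^sup>2 \<partial>M) * sqrt (\<integral>w. (norm (S w))\<^sup>2 \<partial>M)"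
    by (rule cs_integral[OF Gn]) (use Sm Gi Si in auto)
  also have "\<dots> \<le> sqrt (\<integral>w. (norm (G w))\<^sup>2 \<partial>M) * 1"
    using n1 unfolding S_def by (intro mult_left_mono) auto
  finally show "z \<le> ennreal (sqrt (\<integral>w. (norm (G w))\<^sup>2 \<partial>M))" using z by (simp add: ennreal_leI)
qed

end

context lset
begin

abbreviation "Fh \<equiv> lift M (\<lambda>\<mu>. integral\<^sup>L \<mu> h)"

lemma frechet_LX:
  assumes X: "X \<in> L2rv M"
  shows "frechet_L2 M Fh X (\<lambda>Y. \<integral>w. Dh (X w) (Y w) \<partial>M)"
proof -
  interpret prob_space M by (rule P)
  have Xm: "X \<in> borel_measurable M" using X by (simp add: L2rv_def)
  have add: "\<forall>(Y::'w\<Rightarrow>'h)\<in>L2rv M. \<forall>(Z::'w\<Rightarrow>'h)\<in>L2rv M. (\<integral>w. Dh (X w) (Y w + Z w) \<partial>M) = (\<integral>w. Dh (X w) (Y w) \<partial>M) + (\<integral>w. Dh (X w) (Z w) \<partial>M)"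
  proof (intro ballI)
    fix Y Z :: "'w \<Rightarrow> 'h" assume Y: "Y \<in> L2rv M" and Z: "Z \<in> L2rv M"
    have "(\<lambda>w. Dh (X w) (Y w + Z w)) = (\<lambda>w. Dh (X w) (Y w) + Dh (X w) (Z w))"
      by (simp add: blinfun.add_right fun_eq_iff)
    then show "(\<integral>w. Dh (X w) (Y w + Z w) \<partial>M) = (\<integral>w. Dh (X w) (Y w) \<partial>M) + (\<integral>w. Dh (X w) (Z w) \<partial>M)"
      using DhXY_int[OF X Y] DhXY_int[OF X Z] by simp
  qed
  have scl: "\<forall>(Y::'w\<Rightarrow>'h)\<in>L2rv M. \<forall>c::real. (\<integral>w. Dh (X w) (c *\<^sub>R Y w) \<partial>M) = c *\<^sub>R (\<integral>w. Dh (X w) (Y w) \<partial>M)"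
    by (simp add: blinfun.scaleR_right)
  have bnd: "\<exists>K. \<forall>(Y::'w\<Rightarrow>'h)\<in>L2rv M. norm (\<integral>w. Dh (X w) (Y w) \<partial>M) \<le> K * L2norm M Y"
    using DhXY_bound[OF X] by blast
  have rem: "\<forall>e>0. \<exists>d>0. \<forall>(Y::'w\<Rightarrow>'h)\<in>L2rv M. L2norm M Y < d \<longrightarrow>
      norm (Fh (\<lambda>w. X w + Y w) - Fh X - (\<integral>w. Dh (X w) (Y w) \<partial>M)) \<le> e * L2norm M Y"
  proof (intro allI impI)
    fix e :: real assume e: "e > 0"
    have "\<exists>d>0. \<forall>Z\<in>L2rv M. L2norm M Z < d \<longrightarrow> (\<integral>w. (Qf (X w) (Z w))\<^sup>2 \<partial>M) < e\<^sup>2"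
    proof (rule key[OF P X])
      show "0 \<le> (Qf x z)\<^sup>2" for x z by simp
      show "(Qf x z)\<^sup>2 \<le> 12 * (max C 0)\<^sup>2 * (1 + (norm x)\<^sup>2 + (norm z)\<^sup>2)" for x z by (rule Qf_sq_bound)
      show "\<exists>\<delta>>0. \<forall>z. norm z < \<delta> \<longrightarrow> (Qf x z)\<^sup>2 < b" if "b > 0" for x b using Qf_small[OF that] .
      show "(\<lambda>w. (Qf (X w) (Z w))\<^sup>2) \<in> borel_measurable M" if "Z \<in> L2rv M" for Z
        using Qf_meas[OF Xm, of Z] that by (simp add: L2rv_def)
      show "e\<^sup>2 > 0" using e by simp
    qed
    then obtain d where d: "d > 0" "\<And>Z. Z \<in> L2rv M \<Longrightarrow> L2norm M Z < d \<Longrightarrow> (\<integral>w. (Qf (X w) (Z w))\<^sup>2 \<partial>M) < e\<^sup>2"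
      by blast
    show "\<exists>d>0. \<forall>(Y::'w\<Rightarrow>'h)\<in>L2rv M. L2norm M Y < d \<longrightarrow>
      norm (Fh (\<lambda>w. X w + Y w) - Fh X - (\<integral>w. Dh (X w) (Y w) \<partial>M)) \<le> e * L2norm M Y"
    proof (intro exI[of _ d] conjI ballI impI)
      show "d > 0" by (rule d(1))
      fix Y :: "'w \<Rightarrow> 'h" assume Y: "Y \<in> L2rv M" and Yd: "L2norm M Y < d"
      have Ym: "Y \<in> borel_measurable M" using Y by (simp add: L2rv_def)
      have XY: "(\<lambda>w. X w + Y w) \<in> L2rv M" by (rule L2rv_add[OF X Y])
      have XYm: "(\<lambda>w. X w + Y w) \<in> borel_measurable M" using Xm Ym by simp
      have i1: "integrable M (\<lambda>w. h (X w + Y w))" using h_int[OF XY] by simp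
      have i2: "integrable M (\<lambda>w. h (X w))" using h_int[OF X] by simp
      have i3: "integrable M (\<lambda>w. Dh (X w) (Y w))" by (rule DhXY_int[OF X Y])
      have eq: "Fh (\<lambda>w. X w + Y w) - Fh X - (\<integral>w. Dh (X w) (Y w) \<partial>M)
          = (\<integral>w. h (X w + Y w) - h (X w) - Dh (X w) (Y w) \<partial>M)"
        using lift_eq[OF XYm] lift_eq[OF Xm] i1 i2 i3 by simp
      have Qm: "(\<lambda>w. Qf (X w) (Y w)) \<in> borel_measurable M" by (rule Qf_meas[OF Xm Ym])
      have Qi: "integrable M (\<lambda>w. (Qf (X w) (Y w))\<^sup>2)"
      proof (rule Bochner_Integration.integrable_bound[where f="\<lambda>w. 12 * (max C 0)\<^sup>2 * (1 + (norm (X w))\<^sup>2 + (norm (Y w))\<^sup>2)"])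
        show "integrable M (\<lambda>w. 12 * (max C 0)\<^sup>2 * (1 + (norm (X w))\<^sup>2 + (norm (Y w))\<^sup>2))"
          using X Y by (auto simp: L2rv_def)
        show "(\<lambda>w. (Qf (X w) (Y w))\<^sup>2) \<in> borel_measurable M" using Qm by simp
        show "AE w in M. norm ((Qf (X w) (Y w))\<^sup>2) \<le> norm (12 * (max C 0)\<^sup>2 * (1 + (norm (X w))\<^sup>2 + (norm (Y w))\<^sup>2))"
          by (intro AE_I2) (use Qf_sq_bound in simp)
      qed
      have "norm (\<integral>w. h (X w + Y w) - h (X w) - Dh (X w) (Y w) \<partial>M)
          \<le> (\<integral>w. norm (h (X w + Y w) - h (X w) - Dh (X w) (Y w)) \<partial>M)"
        by (rule integral_norm_bound_h)
      also have "\<dots> = (\<integral>w. \<bar>Qf (X w) (Y w) * norm (Y w)\<bar> \<partial>M)"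
      proof (rule Bochner_Integration.integral_cong[OF refl])
        fix w
        show "norm (h (X w + Y w) - h (X w) - Dh (X w) (Y w)) = \<bar>Qf (X w) (Y w) * norm (Y w)\<bar>"
          by (cases "Y w = 0") (simp_all add: Qf_def)
      qed
      also have "\<dots> \<le> sqrt (\<integral>w. (Qf (X w) (Y w))\<^sup>2 \<partial>M) * sqrt (\<integral>w. (norm (Y w))\<^sup>2 \<partial>M)"
        by (rule cs_integral[OF Qm]) (use Ym Qi Y in \<open>auto simp: L2rv_def\<close>)
      also have "\<dots> \<le> e * L2norm M Y"
      proof (rule mult_mono)
        have "sqrt (\<integral>w. (Qf (X w) (Y w))\<^sup>2 \<partial>M) < sqrt (e\<^sup>2)"
          using d(2)[OF Y Yd] by (simp only: real_sqrt_less_iff)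
        then show "sqrt (\<integral>w. (Qf (X w) (Y w))\<^sup>2 \<partial>M) \<le> e" using e by simp
        show "sqrt (\<integral>w. (norm (Y w))\<^sup>2 \<partial>M) \<le> L2norm M Y" by (simp add: L2norm_def)
      qed (use e in \<open>auto simp: L2norm_def\<close>)
      finally show "norm (Fh (\<lambda>w. X w + Y w) - Fh X - (\<integral>w. Dh (X w) (Y w) \<partial>M)) \<le> e * L2norm M Y"
        using eq by simp
    qed
  qed
  show ?thesis unfolding frechet_L2_def using add scl bnd rem by simp
qed

end

context lset
begin

lemma Dh_apply_meas:
  assumes Xm: "X \<in> borel_measurable M"
  shows "(\<lambda>w. blinfun_apply (Dh (X w)) x) \<in> borel_measurable M"
proof -
  have "continuous_on UNIV (\<lambda>u. blinfun_apply (Dh u) x)"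
    by (rule blinfun.continuous_on[OF cont continuous_on_const])
  from meas_comp[OF Xm this] show ?thesis .
qed

lemma trinorm_L1:
  assumes X: "X \<in> L2rv M" and F1: "frechet_L2 M Fh X L1"
  shows "trinorm M L1 \<le> ennreal (sqrt (\<integral>w. (norm (Dh (X w)))\<^sup>2 \<partial>M))"
proof (rule trinorm_bound)
  have Xm: "X \<in> borel_measurable M" using X by (simp add: L2rv_def)
  show "(\<lambda>w. norm (Dh (X w))) \<in> borel_measurable M" by (rule normDh_meas[OF Xm])
  show "(\<lambda>w. blinfun_apply (Dh (X w)) x) \<in> borel_measurable M" for x by (rule Dh_apply_meas[OF Xm])
  show "integrable M (\<lambda>w. (norm (Dh (X w)))\<^sup>2)" by (rule DhX_sq_int[OF X])
  fix A x assume A: "A \<in> sets M"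
  have "L1 (\<lambda>w. indicator A w *\<^sub>R x) = (\<integral>w. blinfun_apply (Dh (X w)) (indicator A w *\<^sub>R x) \<partial>M)"
    using frechet_unique[OF F1 frechet_LX[OF X] L2rv_ind[OF A]] by simp
  also have "\<dots> = (\<integral>w. indicator A w *\<^sub>R blinfun_apply (Dh (X w)) x \<partial>M)"
    by (simp add: blinfun.scaleR_right)
  finally show "L1 (\<lambda>w. indicator A w *\<^sub>R x) = (\<integral>w. indicator A w *\<^sub>R blinfun_apply (Dh (X w)) x \<partial>M)" .
qed

lemma diff_sq_int:
  assumes X1: "X1 \<in> L2rv M" and X2: "X2 \<in> L2rv M"
  shows "integrable M (\<lambda>w. (norm (Dh (X1 w) - Dh (X2 w)))\<^sup>2)"
    and "(\<lambda>w. norm (Dh (X1 w) - Dh (X2 w))) \<in> borel_measurable M"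
proof -
  have X1m: "X1 \<in> borel_measurable M" and X2m: "X2 \<in> borel_measurable M"
    using X1 X2 by (auto simp: L2rv_def)
  have "continuous_on UNIV (\<lambda>p::'h\<times>'h. norm (Dh (fst p) - Dh (snd p)))"
    by (intro continuous_on_norm continuous_on_diff cont_fst cont_snd)
  from meas_pair[OF X1m X2m this]
  show m: "(\<lambda>w. norm (Dh (X1 w) - Dh (X2 w))) \<in> borel_measurable M" by simp
  show "integrable M (\<lambda>w. (norm (Dh (X1 w) - Dh (X2 w)))\<^sup>2)"
  proof (rule Bochner_Integration.integrable_bound[where f="\<lambda>w. 2 * (norm (Dh (X1 w)))\<^sup>2 + 2 * (norm (Dh (X2 w)))\<^sup>2"])
    show "integrable M (\<lambda>w. 2 * (norm (Dh (X1 w)))\<^sup>2 + 2 * (norm (Dh (X2 w)))\<^sup>2)"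
      using DhX_sq_int[OF X1] DhX_sq_int[OF X2] by simp
    show "(\<lambda>w. (norm (Dh (X1 w) - Dh (X2 w)))\<^sup>2) \<in> borel_measurable M" using m by simp
    show "AE w in M. norm ((norm (Dh (X1 w) - Dh (X2 w)))\<^sup>2) \<le> norm (2 * (norm (Dh (X1 w)))\<^sup>2 + 2 * (norm (Dh (X2 w)))\<^sup>2)"
    proof (intro AE_I2)
      fix w
      have "norm (Dh (X1 w) - Dh (X2 w)) \<le> norm (Dh (X1 w)) + norm (Dh (X2 w))" by (rule norm_triangle_ineq4)
      then have "(norm (Dh (X1 w) - Dh (X2 w)))\<^sup>2 \<le> (norm (Dh (X1 w)) + norm (Dh (X2 w)))\<^sup>2"
        by (simp add: power_mono)
      also have "\<dots> \<le> 2 * (norm (Dh (X1 w)))\<^sup>2 + 2 * (norm (Dh (X2 w)))\<^sup>2"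
        using sum_squares_bound[of "norm (Dh (X1 w))" "norm (Dh (X2 w))"] by (simp add: power2_sum)
      finally show "norm ((norm (Dh (X1 w) - Dh (X2 w)))\<^sup>2) \<le> norm (2 * (norm (Dh (X1 w)))\<^sup>2 + 2 * (norm (Dh (X2 w)))\<^sup>2)"
        by simp
    qed
  qed
qed

lemma trinorm_diff:
  assumes X1: "X1 \<in> L2rv M" and X2: "X2 \<in> L2rv M"
    and F1: "frechet_L2 M Fh X1 L1" and F2: "frechet_L2 M Fh X2 L2"
  shows "trinorm M (\<lambda>Y. L1 Y - L2 Y) \<le> ennreal (sqrt (\<integral>w. (norm (Dh (X1 w) - Dh (X2 w)))\<^sup>2 \<partial>M))"
proof (rule trinorm_bound)
  have X1m: "X1 \<in> borel_measurable M" and X2m: "X2 \<in> borel_measurable M"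
    using X1 X2 by (auto simp: L2rv_def)
  show "(\<lambda>w. norm (Dh (X1 w) - Dh (X2 w))) \<in> borel_measurable M" by (rule diff_sq_int(2)[OF X1 X2])
  show "integrable M (\<lambda>w. (norm (Dh (X1 w) - Dh (X2 w)))\<^sup>2)" by (rule diff_sq_int(1)[OF X1 X2])
  show "(\<lambda>w. blinfun_apply (Dh (X1 w) - Dh (X2 w)) x) \<in> borel_measurable M" for x
    using Dh_apply_meas[OF X1m, of x] Dh_apply_meas[OF X2m, of x] by (simp add: blinfun.diff_left)
  fix A x assume A: "A \<in> sets M"
  have i1: "integrable M (\<lambda>w. indicator A w *\<^sub>R blinfun_apply (Dh (X1 w)) x)"
    using DhXY_int[OF X1 L2rv_ind[OF A]] by (simp add: blinfun.scaleR_right)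
  have i2: "integrable M (\<lambda>w. indicator A w *\<^sub>R blinfun_apply (Dh (X2 w)) x)"
    using DhXY_int[OF X2 L2rv_ind[OF A]] by (simp add: blinfun.scaleR_right)
  have "L1 (\<lambda>w. indicator A w *\<^sub>R x) = (\<integral>w. indicator A w *\<^sub>R blinfun_apply (Dh (X1 w)) x \<partial>M)"
    using frechet_unique[OF F1 frechet_LX[OF X1] L2rv_ind[OF A]] by (simp add: blinfun.scaleR_right)
  moreover have "L2 (\<lambda>w. indicator A w *\<^sub>R x) = (\<integral>w. indicator A w *\<^sub>R blinfun_apply (Dh (X2 w)) x \<partial>M)"
    using frechet_unique[OF F2 frechet_LX[OF X2] L2rv_ind[OF A]] by (simp add: blinfun.scaleR_right)
  ultimately show "L1 (\<lambda>w. indicator A w *\<^sub>R x) - L2 (\<lambda>w. indicator A w *\<^sub>R x)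
      = (\<integral>w. indicator A w *\<^sub>R blinfun_apply (Dh (X1 w) - Dh (X2 w)) x \<partial>M)"
    using i1 i2 by (simp add: blinfun.diff_left scaleR_diff_right)
qed

lemma sq_le_ennreal:
  assumes "T \<le> ennreal (sqrt I)" "I \<ge> 0"
  shows "T\<^sup>2 \<le> ennreal I"
proof -
  have "T\<^sup>2 \<le> (ennreal (sqrt I))\<^sup>2" using assms(1) by (intro power_mono) auto
  also have "\<dots> = ennreal ((sqrt I)\<^sup>2)" using assms(2) by (simp add: ennreal_power)
  also have "\<dots> = ennreal I" using assms(2) by simp
  finally show ?thesis .
qed

end

context lset
begin

lemma sq_bound_gen:
  assumes "0 \<le> q" "q \<le> max C 0 * (2 + 2 * norm x + norm y)"
  shows "q\<^sup>2 \<le> 12 * (max C 0)\<^sup>2 * (1 + (norm x)\<^sup>2 + (norm y)\<^sup>2)"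
proof -
  have "q\<^sup>2 \<le> (max C 0 * (2 + 2 * norm x + norm y))\<^sup>2"
    using assms by (simp add: power_mono)
  also have "\<dots> = (max C 0)\<^sup>2 * (2 + 2 * norm x + norm y)\<^sup>2" by (simp add: power_mult_distrib)
  also have "\<dots> \<le> (max C 0)\<^sup>2 * (3 * (2\<^sup>2 + (2 * norm x)\<^sup>2 + (norm y)\<^sup>2))"
    by (intro mult_left_mono sq3) simp
  also have "\<dots> \<le> 12 * (max C 0)\<^sup>2 * (1 + (norm x)\<^sup>2 + (norm y)\<^sup>2)"
    by (simp add: algebra_simps power_mult_distrib)
  finally show ?thesis .
qed

lemma Phi2_bound: "(norm (Dh (x + z) - Dh x))\<^sup>2 \<le> 12 * (max C 0)\<^sup>2 * (1 + (norm x)\<^sup>2 + (norm z)\<^sup>2)"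
proof (rule sq_bound_gen)
  have a: "norm (Dh (x + z)) \<le> max C 0 * (1 + norm x + norm z)"
    using Dh_norm[of "x + z"] norm_triangle_ineq[of x z]
    by (smt (verit, best) Cp0 mult_left_mono)
  have "norm (Dh (x + z) - Dh x) \<le> norm (Dh (x + z)) + norm (Dh x)" by (rule norm_triangle_ineq4)
  also have "\<dots> \<le> max C 0 * (1 + norm x + norm z) + max C 0 * (1 + norm x)"
    using a Dh_norm[of x] by linarith
  also have "\<dots> = max C 0 * (2 + 2 * norm x + norm z)" by (simp add: algebra_simps)
  finally show "norm (Dh (x + z) - Dh x) \<le> max C 0 * (2 + 2 * norm x + norm z)" .
qed simp

lemma Phi2_small:
  assumes b: "b > 0"
  shows "\<exists>\<delta>>0. \<forall>z. norm z < \<delta> \<longrightarrow> (norm (Dh (x + z) - Dh x))\<^sup>2 < b"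
proof -
  have sb: "sqrt b > 0" using b by simp
  from cont[unfolded continuous_on_iff] sb obtain \<delta> where \<delta>: "\<delta> > 0"
    "\<And>x'. dist x' x < \<delta> \<Longrightarrow> dist (Dh x') (Dh x) < sqrt b"
    by blast
  show ?thesis
  proof (intro exI[of _ \<delta>] conjI allI impI)
    show "\<delta> > 0" by (rule \<delta>(1))
    fix z :: 'h assume z: "norm z < \<delta>"
    have "dist (x + z) x < \<delta>" using z by (simp add: dist_norm)
    from \<delta>(2)[OF this] have "norm (Dh (x + z) - Dh x) < sqrt b" by (simp add: dist_norm)
    then have "(norm (Dh (x + z) - Dh x))\<^sup>2 < (sqrt b)\<^sup>2"
      by (intro power_strict_mono) auto
    then show "(norm (Dh (x + z) - Dh x))\<^sup>2 < b" using b by simp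
  qed
qed

lemma Phi2_meas:
  assumes Xm: "X \<in> borel_measurable M" and Zm: "Z \<in> borel_measurable M"
  shows "(\<lambda>w. (norm (Dh (X w + Z w) - Dh (X w)))\<^sup>2) \<in> borel_measurable M"
proof -
  have c1: "continuous_on UNIV (\<lambda>p::'h\<times>'h. Dh (fst p + snd p))"
    by (rule continuous_on_compose2[OF cont continuous_on_add[OF continuous_on_fst[OF continuous_on_id] continuous_on_snd[OF continuous_on_id]]]) auto
  have "continuous_on UNIV (\<lambda>p::'h\<times>'h. (norm (Dh (fst p + snd p) - Dh (fst p)))\<^sup>2)"
    by (intro continuous_on_power continuous_on_norm continuous_on_diff c1 cont_fst)
  from meas_pair[OF Xm Zm this] show ?thesis by simp
qed

lemma P2_part:
  assumes mu: "\<mu>0 \<in> P2"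
  shows "is_L_derivative M (\<lambda>\<mu>. integral\<^sup>L \<mu> h) \<mu>0 Dh"
proof -
  have pm: "prob_space \<mu>0" and sb: "sets \<mu>0 = sets borel"
    and fin: "(\<integral>\<^sup>+ x. ennreal ((norm x)\<^sup>2) \<partial>\<mu>0) < \<infinity>"
    using mu by (auto simp: P2_def)
  interpret m0: prob_space \<mu>0 by (rule pm)
  have mb: "f \<in> borel_measurable \<mu>0" if "continuous_on UNIV f" for f :: "'h \<Rightarrow> 'c::topological_space"
  proof -
    have "f \<in> measurable borel borel" by (rule borel_measurable_continuous_onI[OF that])
    moreover have "measurable \<mu>0 (borel :: 'c measure) = measurable borel borel"
      by (rule measurable_cong_sets[OF sb refl])
    ultimately show ?thesis by simp
  qed
  have g1: "Dh \<in> borel_measurable \<mu>0" by (rule mb[OF cont])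
  have nm: "(\<lambda>x. (norm x)\<^sup>2) \<in> borel_measurable \<mu>0"
    by (rule mb) (intro continuous_on_power continuous_on_norm continuous_on_id)
  have ni: "integrable \<mu>0 (\<lambda>x. (norm x)\<^sup>2)"
    by (rule integrableI_nonneg[OF nm]) (use fin in auto)
  have dm: "(\<lambda>x. (norm (Dh x))\<^sup>2) \<in> borel_measurable \<mu>0"
    by (rule mb) (intro continuous_on_power continuous_on_norm cont)
  have di: "integrable \<mu>0 (\<lambda>x. (norm (Dh x))\<^sup>2)"
  proof (rule Bochner_Integration.integrable_bound[where f="\<lambda>x. 2 * (max C 0)\<^sup>2 * (1 + (norm x)\<^sup>2)"])
    show "integrable \<mu>0 (\<lambda>x. 2 * (max C 0)\<^sup>2 * (1 + (norm x)\<^sup>2))" using ni by simp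
    show "(\<lambda>x. (norm (Dh x))\<^sup>2) \<in> borel_measurable \<mu>0" by (rule dm)
    show "AE x in \<mu>0. norm ((norm (Dh x))\<^sup>2) \<le> norm (2 * (max C 0)\<^sup>2 * (1 + (norm x)\<^sup>2))"
    proof (intro AE_I2)
      fix x :: 'h
      have "(norm (Dh x))\<^sup>2 \<le> (max C 0 * (1 + norm x))\<^sup>2"
        using Dh_norm[of x] by (simp add: power_mono)
      also have "\<dots> = (max C 0)\<^sup>2 * (1 + norm x)\<^sup>2" by (simp add: power_mult_distrib)
      also have "\<dots> \<le> (max C 0)\<^sup>2 * (2 * (1 + (norm x)\<^sup>2))"
      proof (intro mult_left_mono)
        have s: "2 * 1 * norm x \<le> 1\<^sup>2 + (norm x)\<^sup>2" by (rule sum_squares_bound)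
        have "(1 + norm x)\<^sup>2 = 1\<^sup>2 + (norm x)\<^sup>2 + 2 * 1 * norm x" by (rule power2_sum)
        with s show "(1 + norm x)\<^sup>2 \<le> 2 * (1 + (norm x)\<^sup>2)" by simp
      qed simp
      finally show "norm ((norm (Dh x))\<^sup>2) \<le> norm (2 * (max C 0)\<^sup>2 * (1 + (norm x)\<^sup>2))"
        by (simp add: algebra_simps)
    qed
  qed
  have "(\<integral>\<^sup>+ x. ennreal ((norm (Dh x))\<^sup>2) \<partial>\<mu>0) < \<infinity>"
    using di by (simp add: integrable_iff_bounded)
  moreover have "\<forall>X\<in>L2rv M. distr M borel X = \<mu>0 \<longrightarrow> (\<forall>L. frechet_L2 M (lift M (\<lambda>\<mu>. integral\<^sup>L \<mu> h)) X L \<longrightarrow>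
        (\<forall>Y\<in>L2rv M. L Y = integral\<^sup>L M (\<lambda>w. blinfun_apply (Dh (X w)) (Y w))))"
    using frechet_unique frechet_LX by blast
  ultimately show ?thesis unfolding is_L_derivative_def using g1 by blast
qed

lemma main_all:
  shows "(\<forall>X1\<in>L2rv M. \<exists>L. frechet_L2 M (lift M (\<lambda>\<mu>. integral\<^sup>L \<mu> h)) X1 L)
    \<and> (\<forall>X1\<in>L2rv M. \<forall>L1. frechet_L2 M (lift M (\<lambda>\<mu>. integral\<^sup>L \<mu> h)) X1 L1 \<longrightarrow>
          (trinorm M L1)\<^sup>2 \<le> (\<integral>\<^sup>+ w. ennreal ((norm (Dh (X1 w)))\<^sup>2) \<partial>M)
          \<and> (\<integral>\<^sup>+ w. ennreal ((norm (Dh (X1 w)))\<^sup>2) \<partial>M) < \<infinity>)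
    \<and> (\<forall>X1\<in>L2rv M. \<forall>X2\<in>L2rv M. \<forall>L1 L2.
          frechet_L2 M (lift M (\<lambda>\<mu>. integral\<^sup>L \<mu> h)) X1 L1 \<longrightarrow>
          frechet_L2 M (lift M (\<lambda>\<mu>. integral\<^sup>L \<mu> h)) X2 L2 \<longrightarrow>
          (trinorm M (\<lambda>Y. L1 Y - L2 Y))\<^sup>2 \<le> (\<integral>\<^sup>+ w. ennreal ((norm (Dh (X1 w) - Dh (X2 w)))\<^sup>2) \<partial>M))
    \<and> abs_cont_L_diff M (\<lambda>\<mu>. integral\<^sup>L \<mu> h)
    \<and> (\<forall>\<mu>0\<in>P2. is_L_derivative M (\<lambda>\<mu>. integral\<^sup>L \<mu> h) \<mu>0 Dh)"
proof (intro conjI)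
  show "\<forall>X1\<in>L2rv M. \<exists>L. frechet_L2 M (lift M (\<lambda>\<mu>. integral\<^sup>L \<mu> h)) X1 L"
    using frechet_LX by blast
  show "\<forall>X1\<in>L2rv M. \<forall>L1. frechet_L2 M (lift M (\<lambda>\<mu>. integral\<^sup>L \<mu> h)) X1 L1 \<longrightarrow>
          (trinorm M L1)\<^sup>2 \<le> (\<integral>\<^sup>+ w. ennreal ((norm (Dh (X1 w)))\<^sup>2) \<partial>M)
          \<and> (\<integral>\<^sup>+ w. ennreal ((norm (Dh (X1 w)))\<^sup>2) \<partial>M) < \<infinity>"
  proof (intro ballI allI impI)
    fix X1 L1 assume X1: "X1 \<in> L2rv M" and F1: "frechet_L2 M (lift M (\<lambda>\<mu>. integral\<^sup>L \<mu> h)) X1 L1"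
    have eq: "(\<integral>\<^sup>+ w. ennreal ((norm (Dh (X1 w)))\<^sup>2) \<partial>M) = ennreal (\<integral>w. (norm (Dh (X1 w)))\<^sup>2 \<partial>M)"
      by (rule nn_integral_eq_integral[OF DhX_sq_int[OF X1]]) simp
    show "(trinorm M L1)\<^sup>2 \<le> (\<integral>\<^sup>+ w. ennreal ((norm (Dh (X1 w)))\<^sup>2) \<partial>M)
          \<and> (\<integral>\<^sup>+ w. ennreal ((norm (Dh (X1 w)))\<^sup>2) \<partial>M) < \<infinity>"
      unfolding eq using sq_le_ennreal[OF trinorm_L1[OF X1 F1]] by simp
  qed
  show "\<forall>X1\<in>L2rv M. \<forall>X2\<in>L2rv M. \<forall>L1 L2.
          frechet_L2 M (lift M (\<lambda>\<mu>. integral\<^sup>L \<mu> h)) X1 L1 \<longrightarrow>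
          frechet_L2 M (lift M (\<lambda>\<mu>. integral\<^sup>L \<mu> h)) X2 L2 \<longrightarrow>
          (trinorm M (\<lambda>Y. L1 Y - L2 Y))\<^sup>2 \<le> (\<integral>\<^sup>+ w. ennreal ((norm (Dh (X1 w) - Dh (X2 w)))\<^sup>2) \<partial>M)"
  proof (intro ballI allI impI)
    fix X1 X2 L1 L2 assume X1: "X1 \<in> L2rv M" and X2: "X2 \<in> L2rv M"
      and F1: "frechet_L2 M (lift M (\<lambda>\<mu>. integral\<^sup>L \<mu> h)) X1 L1"
      and F2: "frechet_L2 M (lift M (\<lambda>\<mu>. integral\<^sup>L \<mu> h)) X2 L2"
    have eq: "(\<integral>\<^sup>+ w. ennreal ((norm (Dh (X1 w) - Dh (X2 w)))\<^sup>2) \<partial>M) = ennreal (\<integral>w. (norm (Dh (X1 w) - Dh (X2 w)))\<^sup>2 \<partial>M)"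
      by (rule nn_integral_eq_integral[OF diff_sq_int(1)[OF X1 X2]]) simp
    show "(trinorm M (\<lambda>Y. L1 Y - L2 Y))\<^sup>2 \<le> (\<integral>\<^sup>+ w. ennreal ((norm (Dh (X1 w) - Dh (X2 w)))\<^sup>2) \<partial>M)"
      unfolding eq using sq_le_ennreal[OF trinorm_diff[OF X1 X2 F1 F2]] by simp
  qed
  show "abs_cont_L_diff M (\<lambda>\<mu>. integral\<^sup>L \<mu> h)"
    unfolding abs_cont_L_diff_def
  proof (intro conjI ballI allI impI)
    fix X :: "'w \<Rightarrow> 'h" assume X: "X \<in> L2rv M"
    have "trinorm M (\<lambda>Y. \<integral>w. Dh (X w) (Y w) \<partial>M) < \<infinity>"
      using trinorm_L1[OF X frechet_LX[OF X]] by (simp add: order_le_less_trans)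
    then show "\<exists>L. frechet_L2 M (lift M (\<lambda>\<mu>. integral\<^sup>L \<mu> h)) X L \<and> trinorm M L < \<infinity>"
      using frechet_LX[OF X] by blast
  next
    fix X :: "'w \<Rightarrow> 'h" and e :: real assume X: "X \<in> L2rv M" and e: "e > 0"
    have Xm: "X \<in> borel_measurable M" using X by (simp add: L2rv_def)
    have "\<exists>d>0. \<forall>Z\<in>L2rv M. L2norm M Z < d \<longrightarrow> (\<integral>w. (norm (Dh (X w + Z w) - Dh (X w)))\<^sup>2 \<partial>M) < e\<^sup>2"
    proof (rule key[OF P X])
      show "0 \<le> (norm (Dh (x + z) - Dh x))\<^sup>2" for x z by simp
      show "(norm (Dh (x + z) - Dh x))\<^sup>2 \<le> 12 * (max C 0)\<^sup>2 * (1 + (norm x)\<^sup>2 + (norm z)\<^sup>2)" for x z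
        by (rule Phi2_bound)
      show "\<exists>\<delta>>0. \<forall>z. norm z < \<delta> \<longrightarrow> (norm (Dh (x + z) - Dh x))\<^sup>2 < b" if "b > 0" for x b
        using Phi2_small[OF that] .
      show "(\<lambda>w. (norm (Dh (X w + Z w) - Dh (X w)))\<^sup>2) \<in> borel_measurable M" if "Z \<in> L2rv M" for Z
        using Phi2_meas[OF Xm, of Z] that by (simp add: L2rv_def)
      show "e\<^sup>2 > 0" using e by simp
    qed
    then obtain d where d: "d > 0"
      "\<And>Z. Z \<in> L2rv M \<Longrightarrow> L2norm M Z < d \<Longrightarrow> (\<integral>w. (norm (Dh (X w + Z w) - Dh (X w)))\<^sup>2 \<partial>M) < e\<^sup>2"
      by blast
    show "\<exists>d>0. \<forall>X'\<in>L2rv M. \<forall>L L'.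
         frechet_L2 M (lift M (\<lambda>\<mu>. integral\<^sup>L \<mu> h)) X L \<longrightarrow> frechet_L2 M (lift M (\<lambda>\<mu>. integral\<^sup>L \<mu> h)) X' L' \<longrightarrow>
         L2norm M (\<lambda>w. X' w - X w) < d \<longrightarrow> trinorm M (\<lambda>Y. L' Y - L Y) < ennreal e"
    proof (intro exI[of _ d] conjI ballI allI impI)
      show "d > 0" by (rule d(1))
      fix X' L L' assume X': "X' \<in> L2rv M"
        and F: "frechet_L2 M (lift M (\<lambda>\<mu>. integral\<^sup>L \<mu> h)) X L"
        and F': "frechet_L2 M (lift M (\<lambda>\<mu>. integral\<^sup>L \<mu> h)) X' L'"
        and dd: "L2norm M (\<lambda>w. X' w - X w) < d"
      have Z: "(\<lambda>w. X' w - X w) \<in> L2rv M" by (rule L2rv_diff[OF X' X])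
      have "(\<integral>w. (norm (Dh (X' w) - Dh (X w)))\<^sup>2 \<partial>M) < e\<^sup>2"
        using d(2)[OF Z dd] by simp
      then have "sqrt (\<integral>w. (norm (Dh (X' w) - Dh (X w)))\<^sup>2 \<partial>M) < sqrt (e\<^sup>2)"
        by (simp only: real_sqrt_less_iff)
      then have s: "sqrt (\<integral>w. (norm (Dh (X' w) - Dh (X w)))\<^sup>2 \<partial>M) < e" using e by simp
      have "trinorm M (\<lambda>Y. L' Y - L Y) \<le> ennreal (sqrt (\<integral>w. (norm (Dh (X' w) - Dh (X w)))\<^sup>2 \<partial>M))"
        by (rule trinorm_diff[OF X' X F' F])
      also have "\<dots> < ennreal e" using s e by (simp add: ennreal_lessI)
      finally show "trinorm M (\<lambda>Y. L' Y - L Y) < ennreal e" .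
    qed
  qed
  show "\<forall>\<mu>0\<in>P2. is_L_derivative M (\<lambda>\<mu>. integral\<^sup>L \<mu> h) \<mu>0 Dh"
    using P2_part by blast
qed

end

theorem lemma3p13:
  fixes M :: "'w::polish_space measure"
    and h :: "'h::{real_inner, polish_space} \<Rightarrow> 'h"
    and Dh :: "'h \<Rightarrow> ('h \<Rightarrow>\<^sub>L 'h)"
    and C :: real
  assumes "prob_space M" and "complete_measure M" and "atomless M"
    and "space M = UNIV" and "sets (borel :: 'w measure) \<subseteq> sets M"
    and deriv: "\<And>u. (h has_derivative blinfun_apply (Dh u)) (at u)"
    and cont: "continuous_on UNIV Dh"
    and growth: "\<And>u v. norm v = 1 \<Longrightarrow> norm (blinfun_apply (Dh u) v) \<le> C * (1 + norm u)"
  shows "(\<forall>X1\<in>L2rv M. \<exists>L. frechet_L2 M (lift M (\<lambda>\<mu>. integral\<^sup>L \<mu> h)) X1 L)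
    \<and> (\<forall>X1\<in>L2rv M. \<forall>L1. frechet_L2 M (lift M (\<lambda>\<mu>. integral\<^sup>L \<mu> h)) X1 L1 \<longrightarrow>
          (trinorm M L1)\<^sup>2 \<le> (\<integral>\<^sup>+ w. ennreal ((norm (Dh (X1 w)))\<^sup>2) \<partial>M)
          \<and> (\<integral>\<^sup>+ w. ennreal ((norm (Dh (X1 w)))\<^sup>2) \<partial>M) < \<infinity>)
    \<and> (\<forall>X1\<in>L2rv M. \<forall>X2\<in>L2rv M. \<forall>L1 L2.
          frechet_L2 M (lift M (\<lambda>\<mu>. integral\<^sup>L \<mu> h)) X1 L1 \<longrightarrow>
          frechet_L2 M (lift M (\<lambda>\<mu>. integral\<^sup>L \<mu> h)) X2 L2 \<longrightarrow>
          (trinorm M (\<lambda>Y. L1 Y - L2 Y))\<^sup>2 \<le> (\<integral>\<^sup>+ w. ennreal ((norm (Dh (X1 w) - Dh (X2 w)))\<^sup>2) \<partial>M))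
    \<and> abs_cont_L_diff M (\<lambda>\<mu>. integral\<^sup>L \<mu> h)
    \<and> (\<forall>\<mu>0\<in>P2. is_L_derivative M (\<lambda>\<mu>. integral\<^sup>L \<mu> h) \<mu>0 Dh)"
proof -
  have L: "lset M h Dh C"
    using assms(1,4) deriv cont growth by (intro lset.intro) auto
  show ?thesis by (rule lset.main_all[OF L])
qed

end
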